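(* Over the family of 3-periodics of $E$: (i) the locus of the Feuerbach point $X_{11}$ (triangle center function $h=s_2s_3(s_2+s_3-s_1)(s_2-s_3)^2$) is the ellipse $x^2/a_c^2+y^2/b_c^2=1$ with $a_c=\dfrac{a(\delta-b^2)}{c^2}$, $b_c=\dfrac{b(a^2-\delta)}{c^2}$ (this ellipse is the confocal caustic to which all sides of all 3-periodics are tangent); (ii) the locus of $X_{55}$ ($h=s_1(s_2+s_3-s_1)$) is the ellipse $x^2/a_{55}^2+y^2/b_{55}^2=1$ with $a_{55}=\dfrac{a(\delta-b^2)}{a^2+b^2}$, $b_{55}=\dfrac{b(a^2-\delta)}{a^2+b^2}$, which is similar to the ellipse in (i).
   Context: Fix real numbers $a>b>0$, let $E$ be the ellipse $x^2/a^2+y^2/b^2=1$, $c^2=a^2-b^2$ and $\delta=\sqrt{a^4-a^2b^2+b^4}$. A 3-periodic is a non-degenerate triangle $P_1P_2P_3$ with all vertices on $E$ such that at each vertex $P_j$ the normal line to $E$ at $P_j$ bisects the interior angle of the triangle at $P_j$. For a triangle let $s_1=|P_2P_3|$, $s_2=|P_3P_1|$, $s_3=|P_1P_2|$. Given a triangle center function $h(s_1,s_2,s_3)$, the center $X_h$ is the point with trilinears $p:q:r=h(s_1,s_2,s_3):h(s_2,s_3,s_1):h(s_3,s_1,s_2)$, i.e. the Cartesian point $\dfrac{p s_1P_1+q s_2P_2+r s_3P_3}{p s_1+q s_2+r s_3}$. The locus of $X_h$ is the set of points $X_h(T)$ over all 3-periodics $T$. *)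

theory Defs
  imports "HOL-Analysis.Analysis"
begin

text \<open>Points of the plane are pairs of reals; dist on real \<times> real is the Euclidean distance.\<close>

definition on_ellipse :: "real \<Rightarrow> real \<Rightarrow> real \<times> real \<Rightarrow> bool" where
  "on_ellipse a b P \<longleftrightarrow> (fst P)^2 / a^2 + (snd P)^2 / b^2 = 1"

definition cross2 :: "real \<times> real \<Rightarrow> real \<times> real \<Rightarrow> real" where
  "cross2 u v = fst u * snd v - snd u * fst v"

text \<open>The normal line to the ellipse at P (direction (x/a^2, y/b^2)) is the
  bisector line of the interior angle QPR, whose direction is the sum of the
  unit vectors from P towards Q and towards R.\<close>
definition normal_bisects :: "real \<Rightarrow> real \<Rightarrow> real \<times> real \<Rightarrow> real \<times> real \<Rightarrow> real \<times> real \<Rightarrow> bool" where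
  "normal_bisects a b P Q R \<longleftrightarrow>
     cross2 ((1 / norm (Q - P)) *\<^sub>R (Q - P) + (1 / norm (R - P)) *\<^sub>R (R - P))
            (fst P / a^2, snd P / b^2) = 0"

definition three_periodic :: "real \<Rightarrow> real \<Rightarrow> real \<times> real \<Rightarrow> real \<times> real \<Rightarrow> real \<times> real \<Rightarrow> bool" where
  "three_periodic a b P1 P2 P3 \<longleftrightarrow>
     on_ellipse a b P1 \<and> on_ellipse a b P2 \<and> on_ellipse a b P3 \<and>
     cross2 (P2 - P1) (P3 - P1) \<noteq> 0 \<and>
     normal_bisects a b P1 P2 P3 \<and> normal_bisects a b P2 P3 P1 \<and> normal_bisects a b P3 P1 P2"

definition tri_center :: "(real \<Rightarrow> real \<Rightarrow> real \<Rightarrow> real) \<Rightarrow> real \<times> real \<Rightarrow> real \<times> real \<Rightarrow> real \<times> real \<Rightarrow> real \<times> real" where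
  "tri_center h P1 P2 P3 =
     (let s1 = dist P2 P3; s2 = dist P3 P1; s3 = dist P1 P2;
          p = h s1 s2 s3; q = h s2 s3 s1; r = h s3 s1 s2
      in (1 / (p * s1 + q * s2 + r * s3)) *\<^sub>R ((p * s1) *\<^sub>R P1 + (q * s2) *\<^sub>R P2 + (r * s3) *\<^sub>R P3))"

definition locus :: "(real \<Rightarrow> real \<Rightarrow> real \<Rightarrow> real) \<Rightarrow> real \<Rightarrow> real \<Rightarrow> (real \<times> real) set" where
  "locus h a b = {tri_center h P1 P2 P3 | P1 P2 P3. three_periodic a b P1 P2 P3}"

definition h_X11 :: "real \<Rightarrow> real \<Rightarrow> real \<Rightarrow> real" where
  "h_X11 s1 s2 s3 = s2 * s3 * (s2 + s3 - s1) * (s2 - s3)^2"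

definition h_X55 :: "real \<Rightarrow> real \<Rightarrow> real \<Rightarrow> real" where
  "h_X55 s1 s2 s3 = s1 * (s2 + s3 - s1)"

definition line_tangent_ellipse :: "real \<Rightarrow> real \<Rightarrow> real \<times> real \<Rightarrow> real \<times> real \<Rightarrow> bool" where
  "line_tangent_ellipse A B P Q \<longleftrightarrow> (\<exists>!X. on_ellipse A B X \<and> (\<exists>t::real. X = P + t *\<^sub>R (Q - P)))"

end

theory Submission
  imports Defs
begin

definition par :: "real \<Rightarrow> real \<Rightarrow> real \<Rightarrow> real \<times> real" where
  "par a b x = (a*(1-x^2)/(1+x^2), 2*b*x/(1+x^2))"

definition mu :: "real \<Rightarrow> real \<Rightarrow> real \<times> real \<Rightarrow> real \<times> real \<Rightarrow> real" where
  "mu a b P Q = 1 - (fst P * fst Q / a^2 + snd P * snd Q / b^2)"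

definition sqd :: "real \<times> real \<Rightarrow> real \<times> real \<Rightarrow> real" where
  "sqd P Q = (fst P - fst Q)^2 + (snd P - snd Q)^2"

lemma pos1: "(1::real) + x^2 > 0"
  by (simp add: add_pos_nonneg)

lemma inv1: "inverse (1 + x^2) * (1 + x^2) = (1::real)"
  using pos1[of x] by simp

lemma par_alt: "par a b x = (a*(1-x^2)*inverse(1+x^2), 2*b*x*inverse(1+x^2))"
  unfolding par_def by (simp add: divide_inverse)

lemma par_on: assumes "a > 0" "b > 0" shows "on_ellipse a b (par a b x)"
proof -
  have ia: "inverse (a^2) * a^2 = 1" "inverse (b^2) * b^2 = 1" using assms by auto
  have i: "inverse (1 + x^2) * (1 + x^2) = 1" by (rule inv1)
  show ?thesis unfolding on_ellipse_def par_alt using ia i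
    by (simp add: divide_inverse) algebra
qed

lemma mu_par: assumes "a > 0" "b > 0"
  shows "mu a b (par a b x) (par a b y) = 2*(x-y)^2*inverse(1+x^2)*inverse(1+y^2)"
proof -
  have ia: "inverse (a^2) * a^2 = 1" "inverse (b^2) * b^2 = 1" using assms by auto
  have i: "inverse (1 + x^2) * (1 + x^2) = 1" "inverse (1 + y^2) * (1 + y^2) = 1" by (rule inv1)+
  show ?thesis unfolding mu_def par_alt using ia i
    by (simp add: divide_inverse) algebra
qed

lemma sqd_par:
  shows "sqd (par a b x) (par a b y) = 4*(x-y)^2*(a^2*(x+y)^2 + b^2*(1-x*y)^2)*(inverse(1+x^2))^2*(inverse(1+y^2))^2"
proof -
  have i: "inverse (1 + x^2) * (1 + x^2) = 1" "inverse (1 + y^2) * (1 + y^2) = 1" by (rule inv1)+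
  show ?thesis unfolding sqd_def par_alt using i
    by simp algebra
qed

lemma cross_par:
  shows "cross2 (par a b y - par a b x) (par a b z - par a b x)
     = 4*a*b*(y-x)*(z-x)*(z-y)*inverse(1+x^2)*inverse(1+y^2)*inverse(1+z^2)"
proof -
  have i: "inverse (1 + x^2) * (1 + x^2) = 1" "inverse (1 + y^2) * (1 + y^2) = 1"
     "inverse (1 + z^2) * (1 + z^2) = 1" by (rule inv1)+
  show ?thesis unfolding cross2_def par_alt using i
    by simp algebra
qed

lemma par_exists:
  assumes "a > 0" "b > 0" "on_ellipse a b P" "P \<noteq> (-a, 0)"
  shows "\<exists>x. P = par a b x"
proof -
  define X where "X = fst P / a"
  define Y where "Y = snd P / b"
  have P: "P = (a*X, b*Y)" using assms(1,2) unfolding X_def Y_def by simp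
  have e: "X^2 + Y^2 = 1" using assms(1,2,3) unfolding P on_ellipse_def by (simp add: power_mult_distrib)
  have X1: "1 + X \<noteq> 0"
  proof
    assume "1 + X = 0" then have "X = -1" by simp
    with e have "Y = 0" by simp
    with \<open>X = -1\<close> assms(4) P show False by simp
  qed
  define x where "x = Y / (1 + X)"
  have ix: "inverse (1+X) * (1+X) = 1" using X1 by simp
  have xx: "x = Y * inverse (1+X)" unfolding x_def by (simp add: divide_inverse)
  have h1: "inverse (1 + x^2) = (1+X)/2"
  proof -
    have "(1 + x^2) * ((1+X)/2) = 1" unfolding xx using ix e by algebra
    then show ?thesis by (metis inverse_unique)
  qed
  have "par a b x = P" unfolding par_alt P h1 unfolding xx using ix e
    by simp algebra
  then show ?thesis by metis
qed

lemma kfacts: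
  fixes a b \<delta> k :: real
  assumes ab: "a > b" "b > 0" and d: "\<delta> = sqrt(a^4 - a^2*b^2 + b^4)"
    and k: "k = (2*a^2 - b^2 + 2*\<delta>)/b^2"
  shows "k > 3" "a^2 = b^2*(k-1)*(k+3)/(4*k)" "\<delta> = b^2*(k^2+3)/(4*k)"
proof -
  have pos: "a^4 - a^2*b^2 + b^4 > 0"
  proof -
    have "a^4 - a^2*b^2 + b^4 = (a^2 - b^2)^2 + a^2*b^2" by algebra
    moreover have "a^2*b^2 > 0" using ab by simp
    ultimately show ?thesis by (metis add_nonneg_pos zero_le_power2)
  qed
  have d2: "\<delta>^2 = a^4 - a^2*b^2 + b^4" unfolding d using real_sqrt_pow2[OF less_imp_le[OF pos]] .
  have d0: "\<delta> \<ge> 0" unfolding d using pos by simp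
  have b2: "b^2 > 0" using ab by simp
  have ab2: "a^2 > b^2" using ab by (simp add: power_strict_mono)
  have "\<delta> > 2*b^2 - a^2"
  proof (cases "2*b^2 - a^2 \<le> 0")
    case True
    have "\<delta> > 0" unfolding d using pos by simp
    then show ?thesis using True by linarith
  next
    case False
    have "\<delta>^2 - (2*b^2 - a^2)^2 = 3*b^2*(a^2-b^2)" using d2 by algebra
    moreover have "3*b^2*(a^2-b^2) > 0" using b2 ab2 by simp
    ultimately have "(2*b^2 - a^2)^2 < \<delta>^2" by linarith
    then show ?thesis using d0 by (rule power2_less_imp_less)
  qed
  then have "2*a^2 - 4*b^2 + 2*\<delta> > 0" by linarith
  then have "(2*a^2 - b^2 + 2*\<delta>)/b^2 > 3" using b2 by (simp add: field_simps)
  then show "k > 3" using k by simp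
  have kb: "b^2 * k = 2*a^2 - b^2 + 2*\<delta>" using k b2 by simp
  have kk: "b^2*(k^2 + 2*k - 3) = 4*a^2*k"
  proof -
    have "2*\<delta> = b^2*k - 2*a^2 + b^2" using kb by simp
    then have "(2*\<delta>)^2 = (b^2*k - 2*a^2 + b^2)^2" by simp
    then have "4*\<delta>^2 = (b^2*k - 2*a^2 + b^2)^2" by (simp add: power_mult_distrib)
    then have "4*(a^4 - a^2*b^2 + b^4) = (b^2*k - 2*a^2 + b^2)^2" using d2 by simp
    then have "b^2 * (b^2*(k^2 + 2*k - 3) - 4*a^2*k) = 0" by algebra
    then show ?thesis using b2 by simp
  qed
  have k0: "k > 0" using \<open>k > 3\<close> by simp
  show "a^2 = b^2*(k-1)*(k+3)/(4*k)" using kk k0 by (simp add: field_simps) algebra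
  show "\<delta> = b^2*(k^2+3)/(4*k)" using kk kb k0 by (simp add: field_simps) algebra
qed

lemma bis_real:
  fixes p1 p2 q1 q2 r1 r2 \<alpha> \<beta> nQ nR :: real
  assumes al: "\<alpha> > 0" "\<beta> > 0"
    and eP: "\<alpha>*p1^2 + \<beta>*p2^2 = 1" and eQ: "\<alpha>*q1^2 + \<beta>*q2^2 = 1" and eR: "\<alpha>*r1^2 + \<beta>*r2^2 = 1"
    and nc: "(q1-p1)*(r2-p2) - (q2-p2)*(r1-p1) \<noteq> 0"
    and nQ: "nQ = sqrt((q1-p1)^2+(q2-p2)^2)" and nR: "nR = sqrt((r1-p1)^2+(r2-p2)^2)"
  shows "((1/nQ)*(q1-p1) + (1/nR)*(r1-p1)) * (\<beta>*p2) - ((1/nQ)*(q2-p2) + (1/nR)*(r2-p2)) * (\<alpha>*p1) = 0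
     \<longleftrightarrow> (1 - (\<alpha>*p1*q1+\<beta>*p2*q2))^2 * nR^2 = (1 - (\<alpha>*p1*r1+\<beta>*p2*r2))^2 * nQ^2"
    (is "?L \<longleftrightarrow> ?R")
proof -
  define muQ where "muQ = 1 - (\<alpha>*p1*q1+\<beta>*p2*q2)"
  define muR where "muR = 1 - (\<alpha>*p1*r1+\<beta>*p2*r2)"
  define cQ where "cQ = (q1-p1)*(\<beta>*p2) - (q2-p2)*(\<alpha>*p1)"
  define cR where "cR = (r1-p1)*(\<beta>*p2) - (r2-p2)*(\<alpha>*p1)"
  define N where "N = (\<alpha>*p1)^2 + (\<beta>*p2)^2"
  have dQ: "(q1-p1) \<noteq> 0 \<or> (q2-p2) \<noteq> 0" using nc by auto
  have dR: "(r1-p1) \<noteq> 0 \<or> (r2-p2) \<noteq> 0" using nc by auto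
  have sQ: "(q1-p1)^2+(q2-p2)^2 > 0" using dQ by (auto simp: add_pos_nonneg add_nonneg_pos)
  have sR: "(r1-p1)^2+(r2-p2)^2 > 0" using dR by (auto simp: add_pos_nonneg add_nonneg_pos)
  have nQp: "nQ > 0" and nRp: "nR > 0" using sQ sR nQ nR by simp_all
  have nQ2: "nQ^2 = (q1-p1)^2+(q2-p2)^2" using nQ sQ by simp
  have nR2: "nR^2 = (r1-p1)^2+(r2-p2)^2" using nR sR by simp
  have muQ2: "2*muQ = \<alpha>*(q1-p1)^2 + \<beta>*(q2-p2)^2" unfolding muQ_def using eP eQ by algebra
  have muR2: "2*muR = \<alpha>*(r1-p1)^2 + \<beta>*(r2-p2)^2" unfolding muR_def using eP eR by algebra
  have muQp: "muQ > 0"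
  proof -
    have "\<alpha>*(q1-p1)^2 + \<beta>*(q2-p2)^2 > 0" using dQ al by (auto simp: add_pos_nonneg add_nonneg_pos)
    then show ?thesis using muQ2 by simp
  qed
  have muRp: "muR > 0"
  proof -
    have "\<alpha>*(r1-p1)^2 + \<beta>*(r2-p2)^2 > 0" using dR al by (auto simp: add_pos_nonneg add_nonneg_pos)
    then show ?thesis using muR2 by simp
  qed
  have lagQ: "cQ^2 + muQ^2 = nQ^2 * N" unfolding cQ_def muQ_def N_def nQ2 using eP by algebra
  have lagR: "cR^2 + muR^2 = nR^2 * N" unfolding cR_def muR_def N_def nR2 using eP by algebra
  have Leq: "?L \<longleftrightarrow> cQ/nQ + cR/nR = 0"
  proof -
    have "((1/nQ)*(q1-p1) + (1/nR)*(r1-p1)) * (\<beta>*p2) - ((1/nQ)*(q2-p2) + (1/nR)*(r2-p2)) * (\<alpha>*p1)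
        = cQ/nQ + cR/nR" unfolding cQ_def cR_def using nQp nRp by (simp add: field_simps)
    then show ?thesis by simp
  qed
  have Req: "?R \<longleftrightarrow> muQ^2*nR^2 = muR^2*nQ^2" unfolding muQ_def muR_def by simp
  show ?thesis
  proof
    assume ?L
    then have "cQ/nQ = - (cR/nR)" using Leq by simp
    then have "cQ * nR = - cR * nQ" using nQp nRp by (simp add: field_simps)
    then have "(cQ * nR)^2 = (cR*nQ)^2" by (metis power2_minus mult_minus_left)
    then have "cQ^2 * nR^2 = cR^2 * nQ^2" by (simp add: power_mult_distrib)
    then have "(nQ^2*N - muQ^2) * nR^2 = (nR^2*N - muR^2)*nQ^2" using lagQ lagR
      by (metis add_diff_cancel_right')
    then have "muQ^2*nR^2 = muR^2*nQ^2" by algebra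
    then show ?R using Req by simp
  next
    assume ?R
    then have m: "muQ^2*nR^2 = muR^2*nQ^2" using Req by simp
    then have "(muQ*nR)^2 = (muR*nQ)^2" by (simp add: power_mult_distrib)
    then have m1: "muQ*nR = muR*nQ" using muQp muRp nQp nRp
      by (metis (no_types, lifting) mult_pos_pos power2_eq_iff_nonneg less_imp_le)
    have "cQ^2 * nR^2 = cR^2 * nQ^2"
    proof -
      have "cQ^2 * nR^2 = (nQ^2*N - muQ^2) * nR^2" using lagQ by (metis add_diff_cancel_right')
      also have "... = (nR^2*N - muR^2)*nQ^2" using m by algebra
      also have "... = cR^2 * nQ^2" using lagR by (metis add_diff_cancel_right')
      finally show ?thesis .
    qed
    then have "(cQ*nR)^2 = (cR*nQ)^2" by (simp add: power_mult_distrib)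
    then have "cQ*nR = cR*nQ \<or> cQ*nR = -(cR*nQ)" by (metis power2_eq_iff)
    then show ?L
    proof
      assume c1: "cQ*nR = cR*nQ"
      define w1 where "w1 = nR*(q1-p1) - nQ*(r1-p1)"
      define w2 where "w2 = nR*(q2-p2) - nQ*(r2-p2)"
      have e1: "w1*(\<alpha>*p1) + w2*(\<beta>*p2) = 0"
      proof -
        have "(q1-p1)*(\<alpha>*p1) + (q2-p2)*(\<beta>*p2) = -muQ" unfolding muQ_def using eP by algebra
        moreover have "(r1-p1)*(\<alpha>*p1) + (r2-p2)*(\<beta>*p2) = -muR" unfolding muR_def using eP by algebra
        ultimately show ?thesis unfolding w1_def w2_def using m1 by algebra
      qed
      have e2: "w1*(\<beta>*p2) - w2*(\<alpha>*p1) = 0" unfolding w1_def w2_def using c1 unfolding cQ_def cR_def by algebra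
      have Np: "N > 0"
      proof -
        have "p1 \<noteq> 0 \<or> p2 \<noteq> 0" using eP by auto
        then show ?thesis unfolding N_def using al by (auto simp: add_pos_nonneg add_nonneg_pos)
      qed
      have "w1 * N = 0" unfolding N_def using e1 e2 by algebra
      then have w1: "w1 = 0" using Np by simp
      have "w2 * N = 0" unfolding N_def using e1 e2 by algebra
      then have w2: "w2 = 0" using Np by simp
      have "nR*nQ*((q1-p1)*(r2-p2) - (q2-p2)*(r1-p1)) = 0"
        using w1 w2 unfolding w1_def w2_def by algebra
      then show ?L using nc nQp nRp by simp
    next
      assume "cQ*nR = -(cR*nQ)"
      then have "cQ/nQ + cR/nR = 0" using nQp nRp by (simp add: field_simps)
      then show ?L using Leq by simp
    qed
  qed
qed

definition qL :: "real \<Rightarrow> real \<Rightarrow> real \<Rightarrow> real" where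
  "qL A B L = 3*A^2*B^2 - 2*A^2*B*L - A^2*L^2 - 2*A*B^2*L + 2*A*B*L^2 - B^2*L^2"

lemma cayley_core:
  fixes A B L x1 x2 x3 :: real
  assumes AB: "A > 0" "B > 0" "L > 0" and d23: "x2 \<noteq> x3"
    and r12: "L*(A*(x1+x2)^2 + B*(1-x1*x2)^2) = A*B*(x1-x2)^2"
    and r13: "L*(A*(x1+x3)^2 + B*(1-x1*x3)^2) = A*B*(x1-x3)^2"
    and r23: "L*(A*(x2+x3)^2 + B*(1-x2*x3)^2) = A*B*(x2-x3)^2"
  shows "qL A B L = 0"
proof -
  define qa where "qa = A*B - L*A - L*B*x1^2"
  define qb where "qb = -2*x1*(A*B+L*A-L*B)"
  define qc where "qc = A*B*x1^2 - L*A*x1^2 - L*B"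
  have p2: "qa*x2^2 + qb*x2 + qc = 0" using r12 unfolding qa_def qb_def qc_def by algebra
  have p3: "qa*x3^2 + qb*x3 + qc = 0" using r13 unfolding qa_def qb_def qc_def by algebra
  have "(x2-x3)*(qa*(x2+x3)+qb) = 0" using p2 p3 by algebra
  then have h1: "qa*(x2+x3)+qb = 0" using d23 by simp
  have "(x2-x3)*(qa*x2*x3 - qc) = 0" using p2 p3 by algebra
  then have h2: "qa*x2*x3 - qc = 0" using d23 by simp
  have F: "A*B*(qb^2-4*qa*qc) - L*(A*qb^2 + B*(qa-qc)^2) = 0"
  proof -
    have "qa^2*(L*(A*(x2+x3)^2 + B*(1-x2*x3)^2) - A*B*(x2-x3)^2) = 0" using r23 by simp
    then show ?thesis using h1 h2 by algebra
  qed
  have "A*B*(qb^2-4*qa*qc) - L*(A*qb^2 + B*(qa-qc)^2) = L * qL A B L * (B*(x1^2-1)^2 + 4*A*x1^2)"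
    unfolding qa_def qb_def qc_def qL_def by algebra
  with F have "L * qL A B L * (B*(x1^2-1)^2 + 4*A*x1^2) = 0" by simp
  moreover have "B*(x1^2-1)^2 + 4*A*x1^2 > 0"
  proof (cases "x1 = 0")
    case True then show ?thesis using AB by simp
  next
    case False then show ?thesis using AB by (simp add: add_nonneg_pos)
  qed
  ultimately show ?thesis using AB by simp
qed

lemma lam_root:
  fixes A B L k :: real
  assumes k3: "k > 3" and B: "B > 0" and L: "L > 0" and A: "4*k*A = B*(k-1)*(k+3)"
    and q: "qL A B L = 0"
  shows "(k+1)^2*L = B*(k-1)*(k+3)"
proof -
  have "16*k^2 * qL A B L = -(B^2*((k+1)^2*L - B*(k-1)*(k+3))*((k-3)^2*L + 3*B*(k-1)*(k+3)))"
    unfolding qL_def using A by algebra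
  then have "B^2*((k+1)^2*L - B*(k-1)*(k+3))*((k-3)^2*L + 3*B*(k-1)*(k+3)) = 0" using q by simp
  moreover have "(k-3)^2*L + 3*B*(k-1)*(k+3) > 0" using k3 B L by (simp add: add_nonneg_pos)
  ultimately show ?thesis using B by simp
qed

lemma sigma_rel:
  fixes A B L k x1 x2 x3 :: real
  assumes k3: "k > 3" and B: "B > 0" and A: "4*k*A = B*(k-1)*(k+3)"
    and L: "(k+1)^2*L = B*(k-1)*(k+3)" and d23: "x2 \<noteq> x3"
    and r12: "L*(A*(x1+x2)^2 + B*(1-x1*x2)^2) = A*B*(x1-x2)^2"
    and r13: "L*(A*(x1+x3)^2 + B*(1-x1*x3)^2) = A*B*(x1-x3)^2"
  shows "x1*x2+x1*x3+x2*x3 = -k" "x1+x2+x3 = -k*(x1*x2*x3)"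
proof -
  define qa where "qa = A*B - L*A - L*B*x1^2"
  define qb where "qb = -2*x1*(A*B+L*A-L*B)"
  define qc where "qc = A*B*x1^2 - L*A*x1^2 - L*B"
  have p2: "qa*x2^2 + qb*x2 + qc = 0" using r12 unfolding qa_def qb_def qc_def by algebra
  have p3: "qa*x3^2 + qb*x3 + qc = 0" using r13 unfolding qa_def qb_def qc_def by algebra
  have "(x2-x3)*(qa*(x2+x3)+qb) = 0" using p2 p3 by algebra
  then have h1: "qa*(x2+x3)+qb = 0" using d23 by simp
  have "(x2-x3)*(qa*x2*x3 - qc) = 0" using p2 p3 by algebra
  then have h2: "qa*x2*x3 - qc = 0" using d23 by simp
  have k0: "k > 0" "k + 1 > 0" using k3 by simp_all
  have Lp: "L > 0"
  proof -
    have "B*(k-1)*(k+3) > 0" using k3 B by simp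
    then have "(k+1)^2*L > 0" using L by simp
    then show ?thesis using k0 by (simp add: zero_less_mult_iff)
  qed
  have Ap: "A > B"
  proof -
    have "4*k*A - 4*k*B = B*(k-3)*(k+1)" using A by algebra
    moreover have "B*(k-3)*(k+1) > 0" using k3 B by simp
    ultimately have "4*k*(A - B) > 0" by (simp add: algebra_simps)
    then show ?thesis using k0 by (simp add: zero_less_mult_iff)
  qed
  have qa0: "qa \<noteq> 0"
  proof
    assume qa: "qa = 0"
    then have "qb = 0" using h1 by simp
    moreover have "A*B+L*A-L*B > 0"
    proof -
      have "L*A - L*B > 0" using Lp Ap by simp
      moreover have "A*B > 0" using Ap B by simp
      ultimately show ?thesis by simp
    qed
    ultimately have "x1 = 0" unfolding qb_def by simp
    then have "qc = - L*B" unfolding qc_def by simp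
    moreover have "qc = 0" using h2 qa by simp
    ultimately show False using Lp B by simp
  qed
  have id1: "4*k*(k+1)^2*(-x1*qb + qc + k*qa) = 0"
    unfolding qa_def qb_def qc_def using A L by algebra
  have id2: "4*k*(k+1)^2*(qa*x1 - qb + k*x1*qc) = 0"
    unfolding qa_def qb_def qc_def using A L by algebra
  have e1: "-x1*qb + qc + k*qa = 0" using id1 k0 by simp
  have e2: "qa*x1 - qb + k*x1*qc = 0" using id2 k0 by simp
  have "qa*(x1*x2+x1*x3+x2*x3 + k) = 0" using h1 h2 e1 by algebra
  then show "x1*x2+x1*x3+x2*x3 = -k" using qa0 by simp
  have "qa*(x1+x2+x3 + k*(x1*x2*x3)) = 0" using h1 h2 e2 by algebra
  then have "x1+x2+x3 + k*(x1*x2*x3) = 0" using qa0 by simp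
  then show "x1+x2+x3 = -k*(x1*x2*x3)" by linarith
qed

lemma sigma_conv:
  fixes A B L k x1 x2 x3 :: real
  assumes k3: "k > 3" and A: "4*k*A = B*(k-1)*(k+3)"
    and L: "(k+1)^2*L = B*(k-1)*(k+3)"
    and s2: "x1*x2+x1*x3+x2*x3 = -k" and s1: "x1+x2+x3 = -k*(x1*x2*x3)"
  shows "L*(A*(x1+x2)^2 + B*(1-x1*x2)^2) = A*B*(x1-x2)^2"
proof -
  have k0: "k > 0" "k + 1 > 0" using k3 by simp_all
  have S: "(x1+x2)^2 = (k + x1*x2)*(1 + k*x1*x2)" using s1 s2 by algebra
  have "4*k*(k+1)^2*(L*(A*(x1+x2)^2 + B*(1-x1*x2)^2) - A*B*(x1-x2)^2) = 0"
    using S A L by algebra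
  then show ?thesis using k0 by simp
qed


definition mm :: "real \<Rightarrow> real \<Rightarrow> real \<Rightarrow> real" where "mm x y z = (y - z)^2 * (1 + x^2)"
definition W11 :: "real \<Rightarrow> real \<Rightarrow> real \<Rightarrow> real" where "W11 m1 m2 m3 = (m2+m3-m1)*(m2-m3)^2"
definition W55 :: "real \<Rightarrow> real \<Rightarrow> real \<Rightarrow> real" where "W55 m1 m2 m3 = m1^2*(m2+m3-m1)"

definition NX :: "(real \<Rightarrow> real \<Rightarrow> real \<Rightarrow> real) \<Rightarrow> real \<Rightarrow> real \<Rightarrow> real \<Rightarrow> real" where
  "NX W x1 x2 x3 = W (mm x1 x2 x3) (mm x2 x3 x1) (mm x3 x1 x2) * (1-x1^2)*(1+x2^2)*(1+x3^2)
     + W (mm x2 x3 x1) (mm x3 x1 x2) (mm x1 x2 x3) * (1-x2^2)*(1+x1^2)*(1+x3^2)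
     + W (mm x3 x1 x2) (mm x1 x2 x3) (mm x2 x3 x1) * (1-x3^2)*(1+x1^2)*(1+x2^2)"
definition NY :: "(real \<Rightarrow> real \<Rightarrow> real \<Rightarrow> real) \<Rightarrow> real \<Rightarrow> real \<Rightarrow> real \<Rightarrow> real" where
  "NY W x1 x2 x3 = W (mm x1 x2 x3) (mm x2 x3 x1) (mm x3 x1 x2) * x1*(1+x2^2)*(1+x3^2)
     + W (mm x2 x3 x1) (mm x3 x1 x2) (mm x1 x2 x3) * x2*(1+x1^2)*(1+x3^2)
     + W (mm x3 x1 x2) (mm x1 x2 x3) (mm x2 x3 x1) * x3*(1+x1^2)*(1+x2^2)"
definition DN :: "(real \<Rightarrow> real \<Rightarrow> real \<Rightarrow> real) \<Rightarrow> real \<Rightarrow> real \<Rightarrow> real \<Rightarrow> real" where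
  "DN W x1 x2 x3 = (W (mm x1 x2 x3) (mm x2 x3 x1) (mm x3 x1 x2)
     + W (mm x2 x3 x1) (mm x3 x1 x2) (mm x1 x2 x3)
     + W (mm x3 x1 x2) (mm x1 x2 x3) (mm x2 x3 x1)) * (1+x1^2)*(1+x2^2)*(1+x3^2)"

definition NxS11 :: "real \<Rightarrow> real \<Rightarrow> real \<Rightarrow> real" where
  "NxS11 S1 S2 S3 = (- 8 * S1^7 * S3 + 2 * S1^6 * S2^2 - 48 * S1^6 * S3^2 + 12 * S1^5 * S2^2 * S3 + 52 * S1^5 * S2 * S3 - 64 * S1^5 * S3^3 - 16 * S1^5 * S3 - 12 * S1^4 * S2^3 + 4 * S1^4 * S2^2 + 216 * S1^4 * S2 * S3^2 + 48 * S1^4 * S3^4 - 294 * S1^4 * S3^2 + 12 * S1^3 * S2^4 * S3 + 4 * S1^3 * S2^2 * S3^3 + 52 * S1^3 * S2^2 * S3 + 528 * S1^3 * S2 * S3^3 + 24 * S1^3 * S2 * S3 + 72 * S1^3 * S3^5 - 324 * S1^3 * S3^3 - 72 * S1^3 * S3 - 2 * S1^2 * S2^6 - 12 * S1^2 * S2^5 - 4 * S1^2 * S2^4 * S3^2 - 52 * S1^2 * S2^3 * S3^2 - 4 * S1^2 * S2^3 - 18 * S1^2 * S2^2 * S3^4 + 18 * S1^2 * S2^2 - 216 * S1^2 * S2 * S3^4 + 1188 * S1^2 * S2 * S3^2 - 432 * S1^2 * S3^4 - 108 * S1^2 * S3^2 - 52 * S1 * S2^5 * S3 - 216 * S1 *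 S2^4 * S3 - 24 * S1 * S2^3 * S3^3 - 528 * S1 * S2^3 * S3 - 1188 * S1 * S2^2 * S3^3 + 216 * S1 * S2^2 * S3 - 324 * S1 * S2 * S3^5 + 324 * S1 * S2 * S3 + 324 * S1 * S3^5 - 1620 * S1 * S3^3 + 8 * S2^7 + 48 * S2^6 + 16 * S2^5 * S3^2 + 64 * S2^5 + 294 * S2^4 * S3^2 - 48 * S2^4 + 72 * S2^3 * S3^4 + 324 * S2^3 * S3^2 - 72 * S2^3 + 108 * S2^2 * S3^4 + 432 * S2^2 * S3^2 + 1620 * S2 * S3^4 - 324 * S2 * S3^2 + 486 * S3^6 - 486 * S3^2)"

definition NyS11 :: "real \<Rightarrow> real \<Rightarrow> real \<Rightarrow> real" where
  "NyS11 S1 S2 S3 = (8 * S1^6 * S3 - 2 * S1^5 * S2^2 - 24 * S1^5 * S2 * S3^2 + 6 * S1^4 * S2^3 * S3 - 24 * S1^4 * S2^2 * S3 - 80 * S1^4 * S2 * S3^3 - 116 * S1^4 * S2 * S3 - 24 * S1^4 * S3^3 - 24 * S1^4 * S3 + 6 * S1^3 * S2^4 + 28 * S1^3 * S2^3 * S3^2 + 28 * S1^3 * S2^3 + 114 * S1^3 * S2^2 * S3^2 + 6 * S1^3 * S2^2 - 24 * S1^3 * S2 * S3^4 - 24 * S1^3 * S2 * S3^2 + 144 * S1^3 * S3^4 + 198 * S1^3 * S3^2 - 2 * S1^2 * S2^5 * S3 - 24 * S1^2 * S2^4 * S3 + 6 * S1^2 * S2^3 * S3^3 + 114 * S1^2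 * S2^3 * S3 + 324 * S1^2 * S2^2 * S3^3 + 324 * S1^2 * S2^2 * S3 - 54 * S1^2 * S2 * S3^3 + 108 * S1^2 * S2 * S3 - 24 * S1 * S2^5 - 116 * S1 * S2^4 * S3^2 - 80 * S1 * S2^4 - 24 * S1 * S2^3 * S3^2 - 24 * S1 * S2^3 + 108 * S1 * S2^2 * S3^4 - 54 * S1 * S2^2 * S3^2 - 1188 * S1 * S2 * S3^4 - 1188 * S1 * S2 * S3^2 - 162 * S1 * S3^4 - 162 * S1 * S3^2 + 8 * S2^6 * S3 - 24 * S2^4 * S3^3 - 24 * S2^4 * S3 + 198 * S2^3 * S3^3 + 144 * S2^3 * S3 - 162 * S2 * S3^5 - 162 * S2 * S3^3 + 972 * S3^5 + 972 * S3^3)"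

definition DnS11 :: "real \<Rightarrow> real \<Rightarrow> real \<Rightarrow> real" where
  "DnS11 S1 S2 S3 = (- 8 * S1^7 * S3 + 2 * S1^6 * S2^2 - 32 * S1^6 * S3^2 - 8 * S1^5 * S2^2 * S3 + 4 * S1^5 * S2 * S3 + 16 * S1^5 * S3^3 - 80 * S1^5 * S3 + 4 * S1^4 * S2^4 - 36 * S1^4 * S2^2 * S3^2 + 20 * S1^4 * S2^2 + 336 * S1^4 * S2 * S3^2 + 96 * S1^4 * S3^4 + 42 * S1^4 * S3^2 - 40 * S1^3 * S2^3 * S3 - 104 * S1^3 * S2^2 * S3^3 + 136 * S1^3 * S2^2 * S3 + 24 * S1^3 * S2 * S3^3 + 456 * S1^3 * S2 * S3 - 72 * S1^3 * S3^5 - 360 * S1^3 * S3^3 - 72 * S1^3 * S3 + 2 * S1^2 * S2^6 - 8 * S1^2 * S2^5 + 20 * S1^2 * S2^4 * S3^2 - 36 * S1^2 * S2^4 + 136 * S1^2 * S2^3 * S3^2 - 104 * S1^2 * S2^3 + 18 * S1^2 * S2^2 * S3^4 - 936 * S1^2 * S2^2 * S3^2 + 18 * S1^2 * S2^2 - 432 * S1^2 * S2 * S3^4 - 648 * S1^2 * S2 * S3^2 + 108 * S1^2 * S3^4 - 540 * S1^2 * S3^2 + 4 * S1 * S2^5 * S3 + 336 * S1 * S2^4 * S3 + 456 * S1 * S2^3 * S3^3 + 24 * S1 * S2^3 * S3 - 648 * S1 * S2^2 * S3^3 - 432 * S1 * S2^2 * S3 + 324 * S1 * S2 * S3^5 +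 1944 * S1 * S2 * S3^3 + 324 * S1 * S2 * S3 + 648 * S1 * S3^5 + 648 * S1 * S3^3 - 8 * S2^7 - 32 * S2^6 - 80 * S2^5 * S3^2 + 16 * S2^5 + 42 * S2^4 * S3^2 + 96 * S2^4 - 72 * S2^3 * S3^4 - 360 * S2^3 * S3^2 - 72 * S2^3 - 540 * S2^2 * S3^4 + 108 * S2^2 * S3^2 + 648 * S2 * S3^4 + 648 * S2 * S3^2 - 486 * S3^6 - 972 * S3^4 - 486 * S3^2)"

definition NxS55 :: "real \<Rightarrow> real \<Rightarrow> real \<Rightarrow> real" where
  "NxS55 S1 S2 S3 = (- 8 * S1^7 * S3 + 2 * S1^6 * S2^2 - 16 * S1^6 * S3^2 + 4 * S1^5 * S2^2 * S3 + 84 * S1^5 * S2 * S3 + 32 * S1^5 * S3^3 + 16 * S1^5 * S3 - 20 * S1^4 * S2^3 - 56 * S1^4 * S2^2 * S3^2 - 4 * S1^4 * S2^2 + 72 * S1^4 * S2 * S3^2 + 16 * S1^4 * S3^4 - 134 * S1^4 * S3^2 + 20 * S1^3 * S2^4 * S3 - 20 * S1^3 * S2^2 * S3^3 - 228 * S1^3 * S2^2 * S3 - 64 * S1^3 * S2 * S3^3 - 88 * S1^3 * S2 * S3 - 24 * S1^3 * S3^5 - 108 * S1^3 * S3^3 + 24 * S1^3 * S3 - 2 * S1^2 * S2^6 - 4 * S1^2 * S2^5 + 4 * S1^2 * S2^4 * S3^2 + 56 * S1^2 * S2^4 + 228 * S1^2 * S2^3 * S3^2 + 20 * S1^2 * S2^3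 + 6 * S1^2 * S2^2 * S3^4 - 6 * S1^2 * S2^2 - 72 * S1^2 * S2 * S3^4 + 684 * S1^2 * S2 * S3^2 + 216 * S1^2 * S3^4 + 108 * S1^2 * S3^2 - 84 * S1 * S2^5 * S3 - 72 * S1 * S2^4 * S3 + 88 * S1 * S2^3 * S3^3 + 64 * S1 * S2^3 * S3 - 684 * S1 * S2^2 * S3^3 + 72 * S1 * S2^2 * S3 + 108 * S1 * S2 * S3^5 - 108 * S1 * S2 * S3 + 108 * S1 * S3^5 - 540 * S1 * S3^3 + 8 * S2^7 + 16 * S2^6 - 16 * S2^5 * S3^2 - 32 * S2^5 + 134 * S2^4 * S3^2 - 16 * S2^4 - 24 * S2^3 * S3^4 + 108 * S2^3 * S3^2 + 24 * S2^3 - 108 * S2^2 * S3^4 - 216 * S2^2 * S3^2 + 540 * S2 * S3^4 - 108 * S2 * S3^2 - 162 * S3^6 + 162 * S3^2)"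

definition NyS55 :: "real \<Rightarrow> real \<Rightarrow> real \<Rightarrow> real" where
  "NyS55 S1 S2 S3 = (8 * S1^6 * S3 - 2 * S1^5 * S2^2 + 8 * S1^5 * S2 * S3^2 + 32 * S1^5 * S3^2 - 2 * S1^4 * S2^3 * S3 - 16 * S1^4 * S2 * S3^3 - 52 * S1^4 * S2 * S3 - 88 * S1^4 * S3^3 + 8 * S1^4 * S3 - 2 * S1^3 * S2^4 + 12 * S1^3 * S2^3 * S3^2 + 12 * S1^3 * S2^3 + 18 * S1^3 * S2^2 * S3^2 - 2 * S1^3 * S2^2 + 8 * S1^3 * S2 * S3^4 - 232 * S1^3 * S2 * S3^2 + 48 * S1^3 * S3^4 + 102 * S1^3 * S3^2 - 2 * S1^2 * S2^5 * S3 - 2 * S1^2 * S2^3 * S3^3 + 18 * S1^2 * S2^3 * S3 + 60 * S1^2 * S2^2 * S3^3 + 60 * S1^2 * S2^2 * S3 + 450 * S1^2 * S2 * S3^3 - 36 * S1^2 * S2 * S3 + 216 * S1^2 * S3^3 + 8 * S1 * S2^5 - 52 * S1 * S2^4 * S3^2 - 16 * S1 * S2^4 - 232 * S1 * S2^3 * S3^2 + 8 * S1 * S2^3 - 36 * S1 * S2^2 * S3^4 + 450 * S1 * S2^2 * S3^2 - 324 * S1 * S2 * S3^4 - 324 * S1 * S2 * S3^2 - 594 * S1 * S3^4 + 54 * S1 * S3^2 + 8 * S2^6 * S3 + 32 * S2^5 * S3 + 8 * S2^4 * S3^3 - 88 * S2^4 * S3 + 102 * S2^3 * S3^3 + 48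 * S2^3 * S3 + 216 * S2^2 * S3^3 + 54 * S2 * S3^5 - 594 * S2 * S3^3 + 324 * S3^5 + 324 * S3^3)"

definition DnS55 :: "real \<Rightarrow> real \<Rightarrow> real \<Rightarrow> real" where
  "DnS55 S1 S2 S3 = (- 8 * S1^7 * S3 + 2 * S1^6 * S2^2 + 64 * S1^6 * S3^2 - 32 * S1^5 * S2^2 * S3 + 100 * S1^5 * S2 * S3 - 80 * S1^5 * S3^3 + 16 * S1^5 * S3 + 4 * S1^4 * S2^4 - 24 * S1^4 * S2^3 + 84 * S1^4 * S2^2 * S3^2 - 4 * S1^4 * S2^2 - 480 * S1^4 * S2 * S3^2 - 54 * S1^4 * S3^2 - 24 * S1^3 * S2^4 * S3 + 248 * S1^3 * S2^3 * S3 + 16 * S1^3 * S2^2 * S3^3 - 368 * S1^3 * S2^2 * S3 + 360 * S1^3 * S2 * S3^3 - 72 * S1^3 * S2 * S3 + 24 * S1^3 * S3^5 + 480 * S1^3 * S3^3 + 24 * S1^3 * S3 + 2 * S1^2 * S2^6 - 32 * S1^2 * S2^5 - 4 * S1^2 * S2^4 * S3^2 + 84 * S1^2 * S2^4 - 368 * S1^2 * S2^3 * S3^2 + 16 * S1^2 * S2^3 - 6 * S1^2 * S2^2 * S3^4 + 744 * S1^2 * S2^2 * S3^2 - 6 * S1^2 * S2^2 + 432 * S1^2 * S2 * S3^2 - 540 * S1^2 * S3^4 + 108 * S1^2 * S3^2 + 100 * S1 * S2^5 * S3 - 480 * S1 * S2^4 * S3 - 72 * S1 * S2^3 * S3^3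 + 360 * S1 * S2^3 * S3 + 432 * S1 * S2^2 * S3^3 - 108 * S1 * S2 * S3^5 - 1512 * S1 * S2 * S3^3 - 108 * S1 * S2 * S3 - 8 * S2^7 + 64 * S2^6 + 16 * S2^5 * S3^2 - 80 * S2^5 - 54 * S2^4 * S3^2 + 24 * S2^3 * S3^4 + 480 * S2^3 * S3^2 + 24 * S2^3 + 108 * S2^2 * S3^4 - 540 * S2^2 * S3^2 + 162 * S3^6 + 324 * S3^4 + 162 * S3^2)"

lemma NX11: "NX W11 x1 x2 x3 = NxS11 (x1+x2+x3) (x1*x2+x1*x3+x2*x3) (x1*x2*x3)"
  unfolding NX_def W11_def mm_def NxS11_def by algebra
lemma NY11: "NY W11 x1 x2 x3 = NyS11 (x1+x2+x3) (x1*x2+x1*x3+x2*x3) (x1*x2*x3)"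
  unfolding NY_def W11_def mm_def NyS11_def by algebra
lemma DN11: "DN W11 x1 x2 x3 = DnS11 (x1+x2+x3) (x1*x2+x1*x3+x2*x3) (x1*x2*x3)"
  unfolding DN_def W11_def mm_def DnS11_def by algebra
lemma NX55: "NX W55 x1 x2 x3 = NxS55 (x1+x2+x3) (x1*x2+x1*x3+x2*x3) (x1*x2*x3)"
  unfolding NX_def W55_def mm_def NxS55_def by algebra
lemma NY55: "NY W55 x1 x2 x3 = NyS55 (x1+x2+x3) (x1*x2+x1*x3+x2*x3) (x1*x2*x3)"
  unfolding NY_def W55_def mm_def NyS55_def by algebra
lemma DN55: "DN W55 x1 x2 x3 = DnS55 (x1+x2+x3) (x1*x2+x1*x3+x2*x3) (x1*x2*x3)"
  unfolding DN_def W55_def mm_def DnS55_def by algebra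

lemma T11x: "NxS11 (-(k*z)) (-k) z * (1+z^2) * (k+1) = -(k-1)*(1-z^2) * DnS11 (-(k*z)) (-k) z"
  unfolding NxS11_def DnS11_def by algebra
lemma T11y: "NyS11 (-(k*z)) (-k) z * (1+z^2) * (k+1) = -2*z * DnS11 (-(k*z)) (-k) z"
  unfolding NyS11_def DnS11_def by algebra
lemma T11d: "DnS11 (-(k*z)) (-k) z = (1+z^2)^2 * (8*k^3*(k+1)^2*(k-3)^2*(1-z^2)^2
     + 2*(k-3)^2*(k+1)^2*(k-1)*(k+3)^3 * z^2)"
  unfolding DnS11_def by algebra
lemma T55x: "NxS55 (-(k*z)) (-k) z * (1+z^2) * (k^2+6*k-3) = -(k-1)*(k-3)*(1-z^2) * DnS55 (-(k*z)) (-k) z"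
  unfolding NxS55_def DnS55_def by algebra
lemma T55y: "NyS55 (-(k*z)) (-k) z * (1+z^2) * (k^2+6*k-3) = 2*(k-3)*z * DnS55 (-(k*z)) (-k) z"
  unfolding NyS55_def DnS55_def by algebra
lemma T55d: "DnS55 (-(k*z)) (-k) z = (1+z^2)^2 * (8*k^3*(k+1)^2*(k^2+6*k-3)*(1-z^2)^2
     + (2*k^8+32*k^7+184*k^6+448*k^5+300*k^4-480*k^3-648*k^2+162) * z^2)"
  unfolding DnS55_def by algebra


lemma dist_sqd: "dist P Q = sqrt (sqd P Q)"
  by (cases P; cases Q) (simp add: dist_Pair_Pair dist_real_def sqd_def)

lemma tc_gen:
  assumes "h (dist P2 P3) (dist P3 P1) (dist P1 P2) * dist P2 P3 = c*u1"
    "h (dist P3 P1) (dist P1 P2) (dist P2 P3) * dist P3 P1 = c*u2"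
    "h (dist P1 P2) (dist P2 P3) (dist P3 P1) * dist P1 P2 = c*u3" "c \<noteq> 0"
  shows "tri_center h P1 P2 P3 = (1/(u1+u2+u3)) *\<^sub>R (u1 *\<^sub>R P1 + u2 *\<^sub>R P2 + u3 *\<^sub>R P3)"
proof -
  have "tri_center h P1 P2 P3 = (1/(c*u1+c*u2+c*u3)) *\<^sub>R ((c*u1) *\<^sub>R P1 + (c*u2) *\<^sub>R P2 + (c*u3) *\<^sub>R P3)"
    unfolding tri_center_def Let_def using assms(1-3) by simp
  also have "... = (1/(c*(u1+u2+u3))) *\<^sub>R (c *\<^sub>R (u1 *\<^sub>R P1 + u2 *\<^sub>R P2 + u3 *\<^sub>R P3))"
    by (simp add: algebra_simps scaleR_add_right)
  also have "... = (1/(u1+u2+u3)) *\<^sub>R (u1 *\<^sub>R P1 + u2 *\<^sub>R P2 + u3 *\<^sub>R P3)"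
    using assms(4) by simp
  finally show ?thesis .
qed

lemma pair_x:
  assumes "a > 0" "b > 0" "xi \<noteq> xj"
  shows "L * sqd (par a b xi) (par a b xj) = a^2*b^2*(mu a b (par a b xi) (par a b xj))^2
     \<longleftrightarrow> L*(a^2*(xi+xj)^2 + b^2*(1-xi*xj)^2) = a^2*b^2*(xi-xj)^2"
proof -
  define F where "F = 4*(xi-xj)^2*(inverse(1+xi^2))^2*(inverse(1+xj^2))^2"
  have F0: "F \<noteq> 0" unfolding F_def using assms(3) pos1[of xi] pos1[of xj] by simp
  have e1: "L * sqd (par a b xi) (par a b xj) = F * (L*(a^2*(xi+xj)^2 + b^2*(1-xi*xj)^2))"
    unfolding sqd_par F_def by algebra
  have e2: "a^2*b^2*(mu a b (par a b xi) (par a b xj))^2 = F * (a^2*b^2*(xi-xj)^2)"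
    unfolding mu_par[OF assms(1,2)] F_def by algebra
  show ?thesis unfolding e1 e2 using F0 by (rule mult_left_cancel)
qed

lemma dist_par:
  assumes "a > 0" "b > 0" "L > 0"
    and r: "L*(a^2*(xj+xk)^2 + b^2*(1-xj*xk)^2) = a^2*b^2*(xj-xk)^2"
  shows "dist (par a b xj) (par a b xk)
     = (a*b/sqrt L * 2 * inverse(1+xi^2) * inverse(1+xj^2) * inverse(1+xk^2)) * mm xi xj xk"
proof (cases "xj = xk")
  case True then show ?thesis by (simp add: mm_def)
next
  case False
  have rel: "L * sqd (par a b xj) (par a b xk) = a^2*b^2*(mu a b (par a b xj) (par a b xk))^2"
    using pair_x[OF assms(1,2) False] r by simp
  have mu: "mu a b (par a b xj) (par a b xk) = 2*(xj-xk)^2*inverse(1+xj^2)*inverse(1+xk^2)"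
    using mu_par[OF assms(1,2)] .
  have mu0: "mu a b (par a b xj) (par a b xk) \<ge> 0" unfolding mu using pos1[of xj] pos1[of xk] by simp
  have "sqd (par a b xj) (par a b xk) = (a*b*mu a b (par a b xj) (par a b xk))^2 / L"
    using rel assms(3) by (simp add: field_simps power_mult_distrib)
  then have "dist (par a b xj) (par a b xk) = a*b*mu a b (par a b xj) (par a b xk) / sqrt L"
    unfolding dist_sqd using assms mu0 by (simp add: real_sqrt_divide)
  also have "... = (a*b/sqrt L * 2 * inverse(1+xi^2) * inverse(1+xj^2) * inverse(1+xk^2)) * mm xi xj xk"
  proof -
    have i: "inverse(1+xi^2) * (1+xi^2) = 1" by (rule inv1)
    show ?thesis unfolding mu mm_def divide_inverse using i by algebra
  qed
  finally show ?thesis .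
qed


lemma comb_par:
  fixes W :: "real \<Rightarrow> real \<Rightarrow> real \<Rightarrow> real" and x1 x2 x3 a b :: real
  defines "w1 \<equiv> W (mm x1 x2 x3) (mm x2 x3 x1) (mm x3 x1 x2)"
    and "w2 \<equiv> W (mm x2 x3 x1) (mm x3 x1 x2) (mm x1 x2 x3)"
    and "w3 \<equiv> W (mm x3 x1 x2) (mm x1 x2 x3) (mm x2 x3 x1)"
  shows "(1/(w1+w2+w3)) *\<^sub>R (w1 *\<^sub>R par a b x1 + w2 *\<^sub>R par a b x2 + w3 *\<^sub>R par a b x3)
     = (a * NX W x1 x2 x3 / DN W x1 x2 x3, 2*b * NY W x1 x2 x3 / DN W x1 x2 x3)"
proof -
  define I1 where "I1 = inverse (1+x1^2)"
  define I2 where "I2 = inverse (1+x2^2)"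
  define I3 where "I3 = inverse (1+x3^2)"
  have i: "I1*(1+x1^2) = 1" "I2*(1+x2^2) = 1" "I3*(1+x3^2) = 1" unfolding I1_def I2_def I3_def
    using inv1 by auto
  have dn: "DN W x1 x2 x3 = (w1+w2+w3)*(1+x1^2)*(1+x2^2)*(1+x3^2)"
    unfolding DN_def w1_def w2_def w3_def by simp
  have invdn: "inverse (DN W x1 x2 x3) = inverse (w1+w2+w3) * I1*I2*I3"
    unfolding dn I1_def I2_def I3_def by (simp add: inverse_mult_distrib)
  have nx: "NX W x1 x2 x3 = w1*(1-x1^2)*(1+x2^2)*(1+x3^2) + w2*(1-x2^2)*(1+x1^2)*(1+x3^2) + w3*(1-x3^2)*(1+x1^2)*(1+x2^2)"
    unfolding NX_def w1_def w2_def w3_def by simp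
  have ny: "NY W x1 x2 x3 = w1*x1*(1+x2^2)*(1+x3^2) + w2*x2*(1+x1^2)*(1+x3^2) + w3*x3*(1+x1^2)*(1+x2^2)"
    unfolding NY_def w1_def w2_def w3_def by simp
  have f: "(1/(w1+w2+w3)) * (w1*(a*(1-x1^2)*I1) + w2*(a*(1-x2^2)*I2) + w3*(a*(1-x3^2)*I3))
      = a * NX W x1 x2 x3 * inverse (DN W x1 x2 x3)"
    unfolding invdn nx divide_inverse using i by algebra
  have s: "(1/(w1+w2+w3)) * (w1*(2*b*x1*I1) + w2*(2*b*x2*I2) + w3*(2*b*x3*I3))
      = 2*b * NY W x1 x2 x3 * inverse (DN W x1 x2 x3)"
    unfolding invdn ny divide_inverse using i by algebra
  show ?thesis unfolding par_alt using f s unfolding I1_def I2_def I3_def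
    by (simp add: divide_inverse)
qed

lemma center_gen:
  fixes W :: "real \<Rightarrow> real \<Rightarrow> real \<Rightarrow> real" and h :: "real \<Rightarrow> real \<Rightarrow> real \<Rightarrow> real"
  assumes a: "a > 0" "b > 0" "L > 0"
    and r12: "L*(a^2*(x1+x2)^2 + b^2*(1-x1*x2)^2) = a^2*b^2*(x1-x2)^2"
    and r13: "L*(a^2*(x1+x3)^2 + b^2*(1-x1*x3)^2) = a^2*b^2*(x1-x3)^2"
    and r23: "L*(a^2*(x2+x3)^2 + b^2*(1-x2*x3)^2) = a^2*b^2*(x2-x3)^2"
    and hW: "\<And>t m1 m2 m3. t \<noteq> 0 \<Longrightarrow> m1 \<noteq> 0 \<Longrightarrow> m2 \<noteq> 0 \<Longrightarrow> m3 \<noteq> 0 \<Longrightarrow>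
        \<exists>c. c \<noteq> 0 \<and> h (t*m1) (t*m2) (t*m3) * (t*m1) = c * W m1 m2 m3
          \<and> h (t*m2) (t*m3) (t*m1) * (t*m2) = c * W m2 m3 m1
          \<and> h (t*m3) (t*m1) (t*m2) * (t*m3) = c * W m3 m1 m2"
    and d: "x1 \<noteq> x2" "x1 \<noteq> x3" "x2 \<noteq> x3"
  shows "tri_center h (par a b x1) (par a b x2) (par a b x3)
     = (a * NX W x1 x2 x3 / DN W x1 x2 x3, 2*b * NY W x1 x2 x3 / DN W x1 x2 x3)"
proof -
  define t where "t = a*b/sqrt L * 2 * inverse(1+x1^2) * inverse(1+x2^2) * inverse(1+x3^2)"
  have r31: "L*(a^2*(x3+x1)^2 + b^2*(1-x3*x1)^2) = a^2*b^2*(x3-x1)^2" using r13 by algebra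
  have d23: "dist (par a b x2) (par a b x3) = t * mm x1 x2 x3"
    using dist_par[OF a r23, of x1] unfolding t_def by (simp add: mult_ac)
  have d31: "dist (par a b x3) (par a b x1) = t * mm x2 x3 x1"
    using dist_par[OF a r31, of x2] unfolding t_def by (simp add: mult_ac)
  have d12: "dist (par a b x1) (par a b x2) = t * mm x3 x1 x2"
    using dist_par[OF a r12, of x3] unfolding t_def by (simp add: mult_ac)
  have t0: "t \<noteq> 0" unfolding t_def using a pos1[of x1] pos1[of x2] pos1[of x3] by simp
  have m0: "mm x1 x2 x3 \<noteq> 0" "mm x2 x3 x1 \<noteq> 0" "mm x3 x1 x2 \<noteq> 0"
    unfolding mm_def using d pos1[of x1] pos1[of x2] pos1[of x3] by auto
  obtain c where c: "c \<noteq> 0"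
    "h (t*mm x1 x2 x3) (t*mm x2 x3 x1) (t*mm x3 x1 x2) * (t*mm x1 x2 x3) = c * W (mm x1 x2 x3) (mm x2 x3 x1) (mm x3 x1 x2)"
    "h (t*mm x2 x3 x1) (t*mm x3 x1 x2) (t*mm x1 x2 x3) * (t*mm x2 x3 x1) = c * W (mm x2 x3 x1) (mm x3 x1 x2) (mm x1 x2 x3)"
    "h (t*mm x3 x1 x2) (t*mm x1 x2 x3) (t*mm x2 x3 x1) * (t*mm x3 x1 x2) = c * W (mm x3 x1 x2) (mm x1 x2 x3) (mm x2 x3 x1)"
    using hW[OF t0 m0] by blast
  have "tri_center h (par a b x1) (par a b x2) (par a b x3) =
     (1/(W (mm x1 x2 x3) (mm x2 x3 x1) (mm x3 x1 x2) + W (mm x2 x3 x1) (mm x3 x1 x2) (mm x1 x2 x3) + W (mm x3 x1 x2) (mm x1 x2 x3) (mm x2 x3 x1)))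
     *\<^sub>R (W (mm x1 x2 x3) (mm x2 x3 x1) (mm x3 x1 x2) *\<^sub>R par a b x1 + W (mm x2 x3 x1) (mm x3 x1 x2) (mm x1 x2 x3) *\<^sub>R par a b x2
        + W (mm x3 x1 x2) (mm x1 x2 x3) (mm x2 x3 x1) *\<^sub>R par a b x3)"
    apply (rule tc_gen[where c=c])
       apply (simp only: d23 d31 d12 c(2))
      apply (simp only: d23 d31 d12 c(3))
     apply (simp only: d23 d31 d12 c(4))
    using c(1) by simp
  also have "... = (a * NX W x1 x2 x3 / DN W x1 x2 x3, 2*b * NY W x1 x2 x3 / DN W x1 x2 x3)"
    by (rule comb_par)
  finally show ?thesis .
qed

lemma hW11: "t \<noteq> 0 \<Longrightarrow> m1 \<noteq> 0 \<Longrightarrow> m2 \<noteq> 0 \<Longrightarrow> m3 \<noteq> 0 \<Longrightarrow>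
        \<exists>c. c \<noteq> 0 \<and> h_X11 (t*m1) (t*m2) (t*m3) * (t*m1) = c * W11 m1 m2 m3
          \<and> h_X11 (t*m2) (t*m3) (t*m1) * (t*m2) = c * W11 m2 m3 m1
          \<and> h_X11 (t*m3) (t*m1) (t*m2) * (t*m3) = c * W11 m3 m1 m2"
  by (rule exI[of _ "t^6*(m1*m2*m3)"]) (simp add: h_X11_def W11_def; algebra)

lemma hW55: "t \<noteq> 0 \<Longrightarrow> m1 \<noteq> 0 \<Longrightarrow> m2 \<noteq> 0 \<Longrightarrow> m3 \<noteq> 0 \<Longrightarrow>
        \<exists>c. c \<noteq> 0 \<and> h_X55 (t*m1) (t*m2) (t*m3) * (t*m1) = c * W55 m1 m2 m3
          \<and> h_X55 (t*m2) (t*m3) (t*m1) * (t*m2) = c * W55 m2 m3 m1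
          \<and> h_X55 (t*m3) (t*m1) (t*m2) * (t*m3) = c * W55 m3 m1 m2"
  by (rule exI[of _ "t^3"]) (simp add: h_X55_def W55_def; algebra)


lemma ratio_aux:
  fixes N D u w c :: real
  assumes "N * u = w * D" "D \<noteq> 0" "u \<noteq> 0"
  shows "c*N/D = c*w/u"
proof -
  have "N = w*D/u" using assms by (simp add: field_simps)
  then show ?thesis using assms by (simp add: field_simps)
qed

lemma X11_formula:
  assumes a: "a > 0" "b > 0" "L > 0" and k3: "k > 3"
    and r12: "L*(a^2*(x1+x2)^2 + b^2*(1-x1*x2)^2) = a^2*b^2*(x1-x2)^2"
    and r13: "L*(a^2*(x1+x3)^2 + b^2*(1-x1*x3)^2) = a^2*b^2*(x1-x3)^2"
    and r23: "L*(a^2*(x2+x3)^2 + b^2*(1-x2*x3)^2) = a^2*b^2*(x2-x3)^2"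
    and d: "x1 \<noteq> x2" "x1 \<noteq> x3" "x2 \<noteq> x3"
    and s2: "x1*x2+x1*x3+x2*x3 = -k" and s1: "x1+x2+x3 = -k*(x1*x2*x3)"
  shows "tri_center h_X11 (par a b x1) (par a b x2) (par a b x3)
     = (a*(-(k-1)*(1-(x1*x2*x3)^2))/((1+(x1*x2*x3)^2)*(k+1)), 2*b*(-2*(x1*x2*x3))/((1+(x1*x2*x3)^2)*(k+1)))"
proof -
  define z where "z = x1*x2*x3"
  have s1': "x1+x2+x3 = -(k*z)" using s1 unfolding z_def by simp
  have tc: "tri_center h_X11 (par a b x1) (par a b x2) (par a b x3)
     = (a * NX W11 x1 x2 x3 / DN W11 x1 x2 x3, 2*b * NY W11 x1 x2 x3 / DN W11 x1 x2 x3)"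
    by (rule center_gen[OF a r12 r13 r23 hW11 d])
  have nx: "NX W11 x1 x2 x3 = NxS11 (-(k*z)) (-k) z" unfolding NX11 s1' s2 z_def ..
  have ny: "NY W11 x1 x2 x3 = NyS11 (-(k*z)) (-k) z" unfolding NY11 s1' s2 z_def ..
  have dn: "DN W11 x1 x2 x3 = DnS11 (-(k*z)) (-k) z" unfolding DN11 s1' s2 z_def ..
  have z1: "1 + z^2 > 0" by (rule pos1)
  have Dp: "DnS11 (-(k*z)) (-k) z > 0"
  proof -
    have p1: "8*k^3*(k+1)^2*(k-3)^2*(1-z^2)^2 \<ge> 0" using k3 by simp
    have p2: "2*(k-3)^2*(k+1)^2*(k-1)*(k+3)^3 * z^2 \<ge> 0" using k3 by simp
    have "8*k^3*(k+1)^2*(k-3)^2*(1-z^2)^2 + 2*(k-3)^2*(k+1)^2*(k-1)*(k+3)^3 * z^2 > 0"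
    proof (cases "z = 0")
      case True then show ?thesis using k3 by simp
    next
      case False
      then have "2*(k-3)^2*(k+1)^2*(k-1)*(k+3)^3 * z^2 > 0" using k3 by simp
      then show ?thesis using p1 by linarith
    qed
    then show ?thesis unfolding T11d using z1 by simp
  qed
  have ex: "a * NxS11 (-(k*z)) (-k) z / DnS11 (-(k*z)) (-k) z = a*(-(k-1)*(1-z^2))/((1+z^2)*(k+1))"
  proof -
    have e: "NxS11 (-(k*z)) (-k) z * (1+z^2) * (k+1) = -(k-1)*(1-z^2) * DnS11 (-(k*z)) (-k) z" by (rule T11x)
    show ?thesis
      by (rule ratio_aux) (use e Dp z1 k3 in \<open>simp_all add: mult.assoc\<close>)
  qed
  have ey: "2*b * NyS11 (-(k*z)) (-k) z / DnS11 (-(k*z)) (-k) z = 2*b*(-2*z)/((1+z^2)*(k+1))"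
  proof -
    have e: "NyS11 (-(k*z)) (-k) z * (1+z^2) * (k+1) = -2*z * DnS11 (-(k*z)) (-k) z" by (rule T11y)
    show ?thesis
      by (rule ratio_aux) (use e Dp z1 k3 in \<open>simp_all add: mult.assoc\<close>)
  qed
  show ?thesis using ex ey unfolding tc nx ny dn z_def by simp
qed

lemma X55_formula:
  assumes a: "a > 0" "b > 0" "L > 0" and k3: "k > 3"
    and r12: "L*(a^2*(x1+x2)^2 + b^2*(1-x1*x2)^2) = a^2*b^2*(x1-x2)^2"
    and r13: "L*(a^2*(x1+x3)^2 + b^2*(1-x1*x3)^2) = a^2*b^2*(x1-x3)^2"
    and r23: "L*(a^2*(x2+x3)^2 + b^2*(1-x2*x3)^2) = a^2*b^2*(x2-x3)^2"
    and d: "x1 \<noteq> x2" "x1 \<noteq> x3" "x2 \<noteq> x3"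
    and s2: "x1*x2+x1*x3+x2*x3 = -k" and s1: "x1+x2+x3 = -k*(x1*x2*x3)"
  shows "tri_center h_X55 (par a b x1) (par a b x2) (par a b x3)
     = (a*(-(k-1)*(k-3)*(1-(x1*x2*x3)^2))/((1+(x1*x2*x3)^2)*(k^2+6*k-3)), 2*b*(2*(k-3)*(x1*x2*x3))/((1+(x1*x2*x3)^2)*(k^2+6*k-3)))"
proof -
  define z where "z = x1*x2*x3"
  have s1': "x1+x2+x3 = -(k*z)" using s1 unfolding z_def by simp
  have tc: "tri_center h_X55 (par a b x1) (par a b x2) (par a b x3)
     = (a * NX W55 x1 x2 x3 / DN W55 x1 x2 x3, 2*b * NY W55 x1 x2 x3 / DN W55 x1 x2 x3)"
    by (rule center_gen[OF a r12 r13 r23 hW55 d])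
  have nx: "NX W55 x1 x2 x3 = NxS55 (-(k*z)) (-k) z" unfolding NX55 s1' s2 z_def ..
  have ny: "NY W55 x1 x2 x3 = NyS55 (-(k*z)) (-k) z" unfolding NY55 s1' s2 z_def ..
  have dn: "DN W55 x1 x2 x3 = DnS55 (-(k*z)) (-k) z" unfolding DN55 s1' s2 z_def ..
  have z1: "1 + z^2 > 0" by (rule pos1)
  have q: "k^2+6*k-3 > 0"
  proof -
    have "k^2+6*k-3 = (k-3)^2 + 12*(k-3) + 24" by algebra
    moreover have "(k-3)^2 + 12*(k-3) + 24 > 0"
    proof -
      have "(k-3)^2 \<ge> 0" by simp
      then show ?thesis using k3 by (smt (verit))
    qed
    ultimately show ?thesis by simp
  qed
  have Dp: "DnS55 (-(k*z)) (-k) z > 0"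
  proof -
    define t where "t = k - 3"
    have t0: "t > 0" using k3 unfolding t_def by simp
    have kt: "k = t + 3" unfolding t_def by simp
    have d2: "2*k^8+32*k^7+184*k^6+448*k^5+300*k^4-480*k^3-648*k^2+162
        = 2*t^8 + 80*t^7 + 1360*t^6 + 12832*t^5 + 73440*t^4 + 260736*t^3 + 559872*t^2 + 663552*t + 331776"
      unfolding kt by algebra
    have d2p: "2*k^8+32*k^7+184*k^6+448*k^5+300*k^4-480*k^3-648*k^2+162 > 0"
      unfolding d2 using t0 by (simp add: add_pos_pos)
    have p1: "8*k^3*(k+1)^2*(k^2+6*k-3)*(1-z^2)^2 \<ge> 0" using k3 q by simp
    have "8*k^3*(k+1)^2*(k^2+6*k-3)*(1-z^2)^2 + (2*k^8+32*k^7+184*k^6+448*k^5+300*k^4-480*k^3-648*k^2+162) * z^2 > 0"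
    proof (cases "z = 0")
      case True then show ?thesis using k3 q by simp
    next
      case False
      then have "(2*k^8+32*k^7+184*k^6+448*k^5+300*k^4-480*k^3-648*k^2+162) * z^2 > 0" using d2p by simp
      then show ?thesis using p1 by linarith
    qed
    then show ?thesis unfolding T55d using z1 by simp
  qed
  have ex: "a * NxS55 (-(k*z)) (-k) z / DnS55 (-(k*z)) (-k) z = a*(-(k-1)*(k-3)*(1-z^2))/((1+z^2)*(k^2+6*k-3))"
  proof -
    have e: "NxS55 (-(k*z)) (-k) z * (1+z^2) * (k^2+6*k-3) = -(k-1)*(k-3)*(1-z^2) * DnS55 (-(k*z)) (-k) z" by (rule T55x)
    show ?thesis
      by (rule ratio_aux) (use e Dp z1 q in \<open>simp_all add: mult.assoc\<close>)
  qed
  have ey: "2*b * NyS55 (-(k*z)) (-k) z / DnS55 (-(k*z)) (-k) z = 2*b*(2*(k-3)*z)/((1+z^2)*(k^2+6*k-3))"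
  proof -
    have e: "NyS55 (-(k*z)) (-k) z * (1+z^2) * (k^2+6*k-3) = 2*(k-3)*z * DnS55 (-(k*z)) (-k) z" by (rule T55y)
    show ?thesis
      by (rule ratio_aux) (use e Dp z1 q in \<open>simp_all add: mult.assoc\<close>)
  qed
  show ?thesis using ex ey unfolding tc nx ny dn z_def by simp
qed

lemma bis_iff:
  assumes ab: "a > 0" "b > 0" and e: "on_ellipse a b P" "on_ellipse a b Q" "on_ellipse a b R"
    and nc: "cross2 (Q-P) (R-P) \<noteq> 0"
  shows "normal_bisects a b P Q R \<longleftrightarrow> (mu a b P Q)^2 * sqd P R = (mu a b P R)^2 * sqd P Q"
proof -
  obtain p1 p2 where P: "P = (p1,p2)" by fastforce
  obtain q1 q2 where Q: "Q = (q1,q2)" by fastforce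
  obtain r1 r2 where R: "R = (r1,r2)" by fastforce
  define \<alpha> where "\<alpha> = 1/a^2"
  define \<beta> where "\<beta> = 1/b^2"
  have al: "\<alpha> > 0" "\<beta> > 0" unfolding \<alpha>_def \<beta>_def using ab by simp_all
  have eP: "\<alpha>*p1^2 + \<beta>*p2^2 = 1" using e(1) unfolding P on_ellipse_def \<alpha>_def \<beta>_def by simp
  have eQ: "\<alpha>*q1^2 + \<beta>*q2^2 = 1" using e(2) unfolding Q on_ellipse_def \<alpha>_def \<beta>_def by simp
  have eR: "\<alpha>*r1^2 + \<beta>*r2^2 = 1" using e(3) unfolding R on_ellipse_def \<alpha>_def \<beta>_def by simp
  have nc': "(q1-p1)*(r2-p2) - (q2-p2)*(r1-p1) \<noteq> 0" using nc unfolding P Q R cross2_def by simp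
  have nb: "normal_bisects a b P Q R \<longleftrightarrow>
     ((1/sqrt((q1-p1)^2+(q2-p2)^2))*(q1-p1) + (1/sqrt((r1-p1)^2+(r2-p2)^2))*(r1-p1)) * (\<beta>*p2)
     - ((1/sqrt((q1-p1)^2+(q2-p2)^2))*(q2-p2) + (1/sqrt((r1-p1)^2+(r2-p2)^2))*(r2-p2)) * (\<alpha>*p1) = 0"
    unfolding normal_bisects_def P Q R cross2_def \<alpha>_def \<beta>_def by (simp add: norm_Pair)
  have sQ: "(sqrt((q1-p1)^2+(q2-p2)^2))^2 = sqd P Q" unfolding P Q sqd_def by (simp add: power2_commute)
  have sR: "(sqrt((r1-p1)^2+(r2-p2)^2))^2 = sqd P R" unfolding P R sqd_def by (simp add: power2_commute)
  have mQ: "mu a b P Q = 1 - (\<alpha>*p1*q1+\<beta>*p2*q2)" unfolding mu_def P Q \<alpha>_def \<beta>_def by simp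
  have mR: "mu a b P R = 1 - (\<alpha>*p1*r1+\<beta>*p2*r2)" unfolding mu_def P R \<alpha>_def \<beta>_def by simp
  show ?thesis unfolding nb mQ mR sQ[symmetric] sR[symmetric]
    by (rule bis_real[OF al eP eQ eR nc' refl refl])
qed

definition NN :: "real \<Rightarrow> real \<Rightarrow> real \<Rightarrow> real \<Rightarrow> real" where
  "NN a b x y = a^2*(x+y)^2 + b^2*(1-x*y)^2"

lemma NN_pos: assumes "a > 0" "b > 0" shows "NN a b x y > 0"
proof (cases "x*y = 1")
  case True
  have "x + y \<noteq> 0"
  proof
    assume "x + y = 0" then have "y = -x" by simp
    with True have "-(x^2) = 1" by (simp add: power2_eq_square)
    moreover have "x^2 \<ge> 0" by simp
    ultimately show False by simp
  qed
  then show ?thesis unfolding NN_def using assms by (simp add: add_pos_nonneg)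
next
  case False
  then have "1 - x*y \<noteq> 0" by simp
  then show ?thesis unfolding NN_def using assms by (simp add: add_nonneg_pos)
qed

lemma vert_x:
  assumes ab: "a > 0" "b > 0" and d: "xi \<noteq> xj" "xi \<noteq> xk"
  shows "(mu a b (par a b xi) (par a b xj))^2 * sqd (par a b xi) (par a b xk)
        = (mu a b (par a b xi) (par a b xk))^2 * sqd (par a b xi) (par a b xj)
     \<longleftrightarrow> (xi-xj)^2 * NN a b xi xk = (xi-xk)^2 * NN a b xi xj"
proof -
  define F where "F = 16*(xi-xj)^2*(xi-xk)^2*(inverse(1+xi^2))^4*(inverse(1+xj^2))^2*(inverse(1+xk^2))^2"
  have F0: "F \<noteq> 0" unfolding F_def using d pos1[of xi] pos1[of xj] pos1[of xk] by simp
  have e1: "(mu a b (par a b xi) (par a b xj))^2 * sqd (par a b xi) (par a b xk) = F * ((xi-xj)^2 * NN a b xi xk)"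
    unfolding mu_par[OF ab] sqd_par F_def NN_def by algebra
  have e2: "(mu a b (par a b xi) (par a b xk))^2 * sqd (par a b xi) (par a b xj) = F * ((xi-xk)^2 * NN a b xi xj)"
    unfolding mu_par[OF ab] sqd_par F_def NN_def by algebra
  show ?thesis unfolding e1 e2 using F0 by (rule mult_left_cancel)
qed

lemma cross_rot: "cross2 (P3-P2) (P1-P2) = cross2 (P2-P1) (P3-P1)"
  by (cases P1; cases P2; cases P3) (simp add: cross2_def algebra_simps)

lemma cross_swap: "cross2 (P3-P1) (P2-P1) = - cross2 (P2-P1) (P3-P1)"
  by (cases P1; cases P2; cases P3) (simp add: cross2_def algebra_simps)

lemma nb_swap: "normal_bisects a b P Q R = normal_bisects a b P R Q"
  unfolding normal_bisects_def by (simp add: add.commute)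

lemma tp_rot: "three_periodic a b P1 P2 P3 \<Longrightarrow> three_periodic a b P2 P3 P1"
  unfolding three_periodic_def using cross_rot[of P3 P2 P1] cross_rot[of P1 P3 P2] cross_rot[of P2 P1 P3]
  by metis

lemma tp_swap: "three_periodic a b P1 P2 P3 \<Longrightarrow> three_periodic a b P1 P3 P2"
  unfolding three_periodic_def using cross_swap[of P3 P1 P2] nb_swap by (metis neg_equal_0_iff_equal)

lemma tp_distinct: assumes "three_periodic a b P1 P2 P3" shows "P1 \<noteq> P2" "P1 \<noteq> P3" "P2 \<noteq> P3"
  using assms unfolding three_periodic_def cross2_def by auto

lemma par_inj: assumes "a > 0" "b > 0" "par a b x = par a b y" shows "x = y"
proof -
  have "mu a b (par a b x) (par a b y) = 2*(x-y)^2*inverse(1+x^2)*inverse(1+y^2)" by (rule mu_par[OF assms(1,2)])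
  moreover have "mu a b (par a b x) (par a b y) = 0"
  proof -
    have "on_ellipse a b (par a b y)" by (rule par_on[OF assms(1,2)])
    then show ?thesis unfolding assms(3) mu_def on_ellipse_def power2_eq_square by simp
  qed
  ultimately have "2*(x-y)^2*inverse(1+x^2)*inverse(1+y^2) = 0" by simp
  then show ?thesis using pos1[of x] pos1[of y] by simp
qed


lemma tp_core:
  assumes ab: "a > 0" "b > 0" and k3: "k > 3" and A: "4*k*a^2 = b^2*(k-1)*(k+3)"
    and L0: "(k+1)^2*L0 = b^2*(k-1)*(k+3)"
    and tp: "three_periodic a b P1 P2 P3"
    and nv: "P1 \<noteq> (-a,0)" "P2 \<noteq> (-a,0)" "P3 \<noteq> (-a,0)"
  shows "\<exists>x1 x2 x3. P1 = par a b x1 \<and> P2 = par a b x2 \<and> P3 = par a b x3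
     \<and> x1 \<noteq> x2 \<and> x1 \<noteq> x3 \<and> x2 \<noteq> x3
     \<and> L0*(a^2*(x1+x2)^2 + b^2*(1-x1*x2)^2) = a^2*b^2*(x1-x2)^2
     \<and> L0*(a^2*(x1+x3)^2 + b^2*(1-x1*x3)^2) = a^2*b^2*(x1-x3)^2
     \<and> L0*(a^2*(x2+x3)^2 + b^2*(1-x2*x3)^2) = a^2*b^2*(x2-x3)^2
     \<and> x1*x2+x1*x3+x2*x3 = -k \<and> x1+x2+x3 = -k*(x1*x2*x3)"
proof -
  have e: "on_ellipse a b P1" "on_ellipse a b P2" "on_ellipse a b P3"
    using tp unfolding three_periodic_def by auto
  obtain x1 where x1: "P1 = par a b x1" using par_exists[OF ab e(1) nv(1)] by blast
  obtain x2 where x2: "P2 = par a b x2" using par_exists[OF ab e(2) nv(2)] by blast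
  obtain x3 where x3: "P3 = par a b x3" using par_exists[OF ab e(3) nv(3)] by blast
  have dP: "P1 \<noteq> P2" "P1 \<noteq> P3" "P2 \<noteq> P3" using tp_distinct[OF tp] by auto
  have d: "x1 \<noteq> x2" "x1 \<noteq> x3" "x2 \<noteq> x3" using dP x1 x2 x3 by auto
  have nc1: "cross2 (P2-P1) (P3-P1) \<noteq> 0" using tp unfolding three_periodic_def by auto
  have nc2: "cross2 (P3-P2) (P1-P2) \<noteq> 0" using nc1 cross_rot by metis
  have b1: "normal_bisects a b P1 P2 P3" and b2: "normal_bisects a b P2 P3 P1"
    using tp unfolding three_periodic_def by auto
  have v1: "(x1-x2)^2 * NN a b x1 x3 = (x1-x3)^2 * NN a b x1 x2"
    using b1 bis_iff[OF ab e(1) e(2) e(3) nc1] vert_x[OF ab d(1) d(2)] unfolding x1 x2 x3 by simp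
  have v2: "(x2-x3)^2 * NN a b x2 x1 = (x2-x1)^2 * NN a b x2 x3"
    using b2 bis_iff[OF ab e(2) e(3) e(1) nc2] vert_x[OF ab d(3) d(1)[symmetric]] unfolding x1 x2 x3 by simp
  have N12: "NN a b x1 x2 > 0" by (rule NN_pos[OF ab])
  have Nsym: "NN a b x2 x1 = NN a b x1 x2" unfolding NN_def by algebra
  define L where "L = a^2*b^2*(x1-x2)^2 / NN a b x1 x2"
  have Lp: "L > 0" unfolding L_def using N12 ab d by simp
  have r12: "L * NN a b x1 x2 = a^2*b^2*(x1-x2)^2" unfolding L_def using N12 by simp
  have r13: "L * NN a b x1 x3 = a^2*b^2*(x1-x3)^2"
  proof -
    have "L * NN a b x1 x3 = a^2*b^2*((x1-x2)^2 * NN a b x1 x3) / NN a b x1 x2" unfolding L_def by simp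
    also have "... = a^2*b^2*(x1-x3)^2" unfolding v1 using N12 by simp
    finally show ?thesis .
  qed
  have r23: "L * NN a b x2 x3 = a^2*b^2*(x2-x3)^2"
  proof -
    have "L * NN a b x2 x3 = a^2*b^2*((x2-x1)^2 * NN a b x2 x3) / NN a b x1 x2" unfolding L_def
      by (simp add: power2_commute)
    also have "... = a^2*b^2*(x2-x3)^2" unfolding v2[symmetric] Nsym using N12 by simp
    finally show ?thesis .
  qed
  have A0: "a^2 > 0" "b^2 > 0" using ab by simp_all
  have q: "qL (a^2) (b^2) L = 0"
    by (rule cayley_core[OF A0 Lp d(3)]) (use r12 r13 r23 in \<open>simp_all add: NN_def\<close>)
  have "(k+1)^2*L = b^2*(k-1)*(k+3)" by (rule lam_root[OF k3 A0(2) Lp _ q]) (use A in simp)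
  then have "(k+1)^2*L = (k+1)^2*L0" using L0 by simp
  moreover have "(k+1)^2 \<noteq> 0" using k3 by simp
  ultimately have LL: "L = L0" by simp
  have s: "x1*x2+x1*x3+x2*x3 = -k" "x1+x2+x3 = -k*(x1*x2*x3)"
    by (rule sigma_rel[OF k3 A0(2) _ _ d(3)]; (use A L0 r12 r13 LL in \<open>simp_all add: NN_def\<close>))+
  show ?thesis using x1 x2 x3 d r12 r13 r23 s unfolding LL NN_def by blast
qed


definition refl :: "real \<times> real \<Rightarrow> real \<times> real" where "refl P = (- fst P, snd P)"

lemma refl_refl[simp]: "refl (refl P) = P" unfolding refl_def by simp

lemma refl_on: "on_ellipse a b (refl P) = on_ellipse a b P"
  unfolding refl_def on_ellipse_def by simp

lemma refl_cross: "cross2 (refl Q - refl P) (refl R - refl P) = - cross2 (Q-P) (R-P)"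
  unfolding refl_def cross2_def by (simp add: algebra_simps)

lemma refl_add: "refl (u + v) = refl u + refl v" unfolding refl_def by (simp add: prod_eq_iff)
lemma refl_diff: "refl u - refl v = refl (u - v)" unfolding refl_def by (simp add: prod_eq_iff)
lemma refl_scale: "refl (c *\<^sub>R v) = c *\<^sub>R refl v" unfolding refl_def by (simp add: prod_eq_iff)
lemma norm_refl: "norm (refl v) = norm v" by (cases v) (simp add: refl_def norm_Pair)
lemma refl_norm: "norm (refl Q - refl P) = norm (Q - P)" unfolding refl_diff norm_refl ..
lemma cross_refl: "cross2 (refl u) (refl v) = - cross2 u v" unfolding refl_def cross2_def by simp

lemma refl_nb: "normal_bisects a b (refl P) (refl Q) (refl R) = normal_bisects a b P Q R"
proof -
  have n: "(fst (refl P) / a^2, snd (refl P) / b^2) = refl (fst P / a^2, snd P / b^2)"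
    unfolding refl_def by simp
  show ?thesis unfolding normal_bisects_def refl_diff norm_refl n refl_scale[symmetric]
      refl_add[symmetric] cross_refl by simp
qed

lemma refl_tp: "three_periodic a b (refl P1) (refl P2) (refl P3) = three_periodic a b P1 P2 P3"
  unfolding three_periodic_def refl_on refl_nb refl_diff cross_refl by simp

lemma refl_dist: "dist (refl P) (refl Q) = dist P Q"
  by (simp add: dist_norm refl_norm)

lemma refl_tc: "tri_center h (refl P1) (refl P2) (refl P3) = refl (tri_center h P1 P2 P3)"
  unfolding tri_center_def Let_def refl_dist refl_scale refl_add ..

lemma refl_mu: "mu a b (refl P) (refl Q) = mu a b P Q" unfolding mu_def refl_def by simp
lemma refl_sqd: "sqd (refl P) (refl Q) = sqd P Q" unfolding sqd_def refl_def by (simp add: power2_commute)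

lemma not_both0:
  assumes ab: "a > 0" "b > 0" and tp: "three_periodic a b P1 P2 P3"
    and p1: "P1 = (-a,0)" and p2: "P2 = (a,0)"
  shows False
proof -
  have e: "on_ellipse a b P1" "on_ellipse a b P2" "on_ellipse a b P3"
    using tp unfolding three_periodic_def by auto
  have nc1: "cross2 (P2-P1) (P3-P1) \<noteq> 0" using tp unfolding three_periodic_def by auto
  have b1: "normal_bisects a b P1 P2 P3" using tp unfolding three_periodic_def by auto
  have rel: "(mu a b P1 P2)^2 * sqd P1 P3 = (mu a b P1 P3)^2 * sqd P1 P2"
    using b1 bis_iff[OF ab e nc1] by simp
  obtain r1 r2 where P3: "P3 = (r1,r2)" by fastforce
  have "4*((-a - r1)^2 + r2^2) = (1 + r1/a)^2 * (4*a^2)"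
    using rel unfolding p1 p2 P3 mu_def sqd_def using ab by (simp add: power2_eq_square)
  moreover have "(1 + r1/a)^2 * (4*a^2) = 4*(a + r1)^2" using ab by (simp add: field_simps power2_eq_square)
  ultimately have "r2^2 = 0" by (simp add: power2_eq_square algebra_simps)
  then have r2: "r2 = 0" by simp
  have "r1^2/a^2 + r2^2/b^2 = 1" using e(3) unfolding P3 on_ellipse_def by simp
  then have "r1^2 = a^2" using r2 ab by (simp add: field_simps)
  then have "r1 = a \<or> r1 = -a" by (metis power2_eq_iff)
  then have "P3 = P1 \<or> P3 = P2" unfolding P3 p1 p2 r2 by auto
  then show False using tp_distinct[OF tp] by auto
qed

lemma no_pm:
  assumes ab: "a > 0" "b > 0" and tp: "three_periodic a b P1 P2 P3"
    and m: "P1 = (-a,0) \<or> P2 = (-a,0) \<or> P3 = (-a,0)"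
  shows "P1 \<noteq> (a,0) \<and> P2 \<noteq> (a,0) \<and> P3 \<noteq> (a,0)"
proof -
  have t1: "three_periodic a b P1 P2 P3" by (rule tp)
  have t2: "three_periodic a b P2 P3 P1" by (rule tp_rot[OF tp])
  have t3: "three_periodic a b P3 P1 P2" by (rule tp_rot[OF t2])
  have t4: "three_periodic a b P1 P3 P2" by (rule tp_swap[OF tp])
  have t5: "three_periodic a b P3 P2 P1" by (rule tp_rot[OF t4])
  have t6: "three_periodic a b P2 P1 P3" by (rule tp_rot[OF t5])
  have d: "P1 \<noteq> P2" "P1 \<noteq> P3" "P2 \<noteq> P3" using tp_distinct[OF tp] by auto
  have a0: "(a::real,0::real) \<noteq> (-a,0)" using ab by simp
  show ?thesis using m not_both0[OF ab t1] not_both0[OF ab t2] not_both0[OF ab t3]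
      not_both0[OF ab t4] not_both0[OF ab t5] not_both0[OF ab t6] d a0 by metis
qed

lemma tangent:
  assumes ab: "a > 0" "b > 0" and acp: "ac \<noteq> 0" "bc \<noteq> 0"
    and AC: "ac^2 = a^2 - L" and BC: "bc^2 = b^2 - L"
    and e: "on_ellipse a b P" "on_ellipse a b Q" and d: "P \<noteq> Q"
    and rel: "L * sqd P Q = a^2*b^2*(mu a b P Q)^2"
  shows "line_tangent_ellipse ac bc P Q"
proof -
  obtain p1 p2 where P: "P = (p1,p2)" by fastforce
  obtain q1 q2 where Q: "Q = (q1,q2)" by fastforce
  define d1 where "d1 = q1 - p1"
  define d2 where "d2 = q2 - p2"
  define AC where "AC = ac^2"
  define BC where "BC = bc^2"
  have ACp: "AC > 0" "BC > 0" unfolding AC_def BC_def using acp by simp_all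
  have eP: "b^2*p1^2 + a^2*p2^2 = a^2*b^2" using e(1) ab unfolding P on_ellipse_def by (simp add: field_simps)
  have eQ: "b^2*q1^2 + a^2*q2^2 = a^2*b^2" using e(2) ab unfolding Q on_ellipse_def by (simp add: field_simps)
  have mu: "a^2*b^2*mu a b P Q = a^2*b^2 - b^2*p1*q1 - a^2*p2*q2" unfolding P Q mu_def using ab
    by (simp add: field_simps)
  have dd: "d1 \<noteq> 0 \<or> d2 \<noteq> 0" using d unfolding P Q d1_def d2_def by auto
  have ident: "a^2*b^2*(b^2*d1^2 + a^2*d2^2 - (p1*d2 - p2*d1)^2) = (a^2*b^2*mu a b P Q)^2"
    unfolding mu d1_def d2_def using eP eQ by algebra
  have key0: "b^2*d1^2 + a^2*d2^2 - (p1*d2 - p2*d1)^2 = a^2*b^2*(mu a b P Q)^2"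
  proof -
    have "a^2*b^2*(b^2*d1^2 + a^2*d2^2 - (p1*d2 - p2*d1)^2) = a^2*b^2*(a^2*b^2*(mu a b P Q)^2)"
      unfolding ident by algebra
    then show ?thesis using ab by simp
  qed
  have key: "BC*d1^2 + AC*d2^2 - (p1*d2 - p2*d1)^2 = 0"
  proof -
    have "sqd P Q = d1^2 + d2^2" unfolding sqd_def P Q d1_def d2_def by (simp add: power2_commute)
    then show ?thesis using key0 rel unfolding AC_def BC_def AC BC by (simp add: algebra_simps)
  qed
  define \<alpha> where "\<alpha> = d1^2/AC + d2^2/BC"
  define \<beta> where "\<beta> = 2*(p1*d1/AC + p2*d2/BC)"
  define \<gamma> where "\<gamma> = p1^2/AC + p2^2/BC - 1"
  have alp: "\<alpha> > 0" unfolding \<alpha>_def using dd ACp by (auto simp: add_pos_nonneg add_nonneg_pos)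
  have eqt: "\<And>t. on_ellipse ac bc (P + t *\<^sub>R (Q - P)) \<longleftrightarrow> \<alpha>*t^2 + \<beta>*t + \<gamma> = 0"
  proof -
    fix t
    have "on_ellipse ac bc (P + t *\<^sub>R (Q - P)) \<longleftrightarrow> (p1 + t*d1)^2/AC + (p2 + t*d2)^2/BC = 1"
      unfolding on_ellipse_def P Q d1_def d2_def AC_def BC_def by simp
    also have "(p1 + t*d1)^2/AC + (p2 + t*d2)^2/BC = \<alpha>*t^2 + \<beta>*t + \<gamma> + 1"
      unfolding \<alpha>_def \<beta>_def \<gamma>_def using ACp by (simp add: field_simps power2_eq_square)
    finally show "on_ellipse ac bc (P + t *\<^sub>R (Q - P)) \<longleftrightarrow> \<alpha>*t^2 + \<beta>*t + \<gamma> = 0" by simp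
  qed
  have disc: "\<beta>^2 = 4*\<alpha>*\<gamma>"
  proof -
    have "AC^2*BC^2*(\<beta>^2 - 4*\<alpha>*\<gamma>) = 4*AC*BC*(BC*d1^2 + AC*d2^2 - (p1*d2 - p2*d1)^2)"
      unfolding \<alpha>_def \<beta>_def \<gamma>_def using ACp by (simp add: field_simps) algebra
    then have "AC^2*BC^2*(\<beta>^2 - 4*\<alpha>*\<gamma>) = 0" using key by simp
    then show ?thesis using ACp by simp
  qed
  define t0 where "t0 = -\<beta>/(2*\<alpha>)"
  have quad: "\<And>t. \<alpha>*t^2 + \<beta>*t + \<gamma> = \<alpha>*(t - t0)^2"
  proof -
    fix t
    have "\<gamma> = \<beta>^2/(4*\<alpha>)" using disc alp by (simp add: field_simps)
    then show "\<alpha>*t^2 + \<beta>*t + \<gamma> = \<alpha>*(t - t0)^2" unfolding t0_def using alp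
      by (simp add: field_simps power2_eq_square)
  qed
  show ?thesis unfolding line_tangent_ellipse_def
  proof (rule ex1I[of _ "P + t0 *\<^sub>R (Q - P)"])
    show "on_ellipse ac bc (P + t0 *\<^sub>R (Q - P)) \<and> (\<exists>t. P + t0 *\<^sub>R (Q - P) = P + t *\<^sub>R (Q - P))"
      using eqt quad by auto
  next
    fix X assume X: "on_ellipse ac bc X \<and> (\<exists>t. X = P + t *\<^sub>R (Q - P))"
    then obtain t where t: "X = P + t *\<^sub>R (Q - P)" by blast
    have "\<alpha>*(t - t0)^2 = 0" using X eqt quad unfolding t by metis
    then have "t = t0" using alp by simp
    then show "X = P + t0 *\<^sub>R (Q - P)" using t by simp
  qed
qed


lemma vieta3:
  fixes c2 c1 c0 x1 x2 x3 :: real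
  assumes d: "x1 \<noteq> x2" "x1 \<noteq> x3" "x2 \<noteq> x3"
    and r: "x1^3 + c2*x1^2 + c1*x1 + c0 = 0" "x2^3 + c2*x2^2 + c1*x2 + c0 = 0" "x3^3 + c2*x3^2 + c1*x3 + c0 = 0"
  shows "x1+x2+x3 = -c2" "x1*x2+x1*x3+x2*x3 = c1" "x1*x2*x3 = -c0"
proof -
  have "(x1-x2)*(x1^2+x1*x2+x2^2 + c2*(x1+x2) + c1) = 0" using r by algebra
  then have e12: "x1^2+x1*x2+x2^2 + c2*(x1+x2) + c1 = 0" using d by simp
  have "(x1-x3)*(x1^2+x1*x3+x3^2 + c2*(x1+x3) + c1) = 0" using r by algebra
  then have e13: "x1^2+x1*x3+x3^2 + c2*(x1+x3) + c1 = 0" using d by simp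
  have "(x2-x3)*(x1+x2+x3+c2) = 0" using e12 e13 by algebra
  then have s1: "x1+x2+x3 = -c2" using d by simp
  then show "x1+x2+x3 = -c2" .
  show s2: "x1*x2+x1*x3+x2*x3 = c1" using e12 s1 by algebra
  show "x1*x2*x3 = -c0" using r(1) s1 s2 by algebra
qed

lemma cubic_roots:
  fixes k z :: real
  assumes k1: "k > 1"
  shows "\<exists>x1 x2 x3. x1 \<noteq> x2 \<and> x1 \<noteq> x3 \<and> x2 \<noteq> x3 \<and> x1*x2+x1*x3+x2*x3 = -k
     \<and> x1+x2+x3 = -k*(x1*x2*x3) \<and> x1*x2*x3 = z"
proof -
  define p where "p = (\<lambda>x::real. x^3 + (k*z)*x^2 + (-k)*x + (-z))"
  have cont: "\<And>S. continuous_on S p" unfolding p_def by (intro continuous_intros)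
  define r where "r = 1 / sqrt k"
  have r0: "r > 0" unfolding r_def using k1 by simp
  have r2: "k * r^2 = 1" unfolding r_def using k1 by (simp add: power_divide)
  have pr: "p r < 0"
  proof -
    have "p r = r*(r^2 - k)" unfolding p_def using r2 by algebra
    moreover have "r^2 < k"
    proof -
      have "r^2 = 1/k" using r2 k1 by (simp add: field_simps)
      moreover have "1/k < 1" using k1 by simp
      ultimately show ?thesis using k1 by linarith
    qed
    ultimately show ?thesis using r0 by (simp add: mult_pos_neg)
  qed
  have pmr: "p (-r) > 0"
  proof -
    have "p (-r) = r*(k - r^2)" unfolding p_def using r2 by algebra
    moreover have "r^2 < k"
    proof -
      have "r^2 = 1/k" using r2 k1 by (simp add: field_simps)
      moreover have "1/k < 1" using k1 by simp
      ultimately show ?thesis using k1 by linarith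
    qed
    ultimately show ?thesis using r0 by simp
  qed
  define M where "M = 1 + k + k*\<bar>z\<bar> + \<bar>z\<bar>"
  have M1: "M \<ge> 1" "M > r"
  proof -
    have "0 \<le> k*\<bar>z\<bar>" using k1 by simp
    then show "M \<ge> 1" unfolding M_def using k1 by simp
    have "r^2 = 1/k" using r2 k1 by (simp add: field_simps)
    moreover have "1/k < 1" using k1 by simp
    ultimately have "r^2 < 1^2" by simp
    then have "r < 1" by (rule power2_less_imp_less) simp
    moreover have "0 \<le> k*\<bar>z\<bar>" using k1 by simp
    moreover have "0 \<le> \<bar>z\<bar>" by simp
    ultimately show "M > r" unfolding M_def using k1 by linarith
  qed
  have MM: "M \<le> M^2" using M1 by (simp add: power2_eq_square)
  have bnd: "\<bar>z*(k*M^2 - 1)\<bar> \<le> k*\<bar>z\<bar>*M^2 + \<bar>z\<bar>*M^2"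
  proof -
    have kM0: "0 \<le> k*M^2" using k1 by simp
    have "\<bar>k*M^2 - 1\<bar> \<le> k*M^2 + 1" unfolding abs_le_iff using kM0 by linarith
    also have "... \<le> k*M^2 + M^2" using M1 MM by simp
    finally have "\<bar>k*M^2 - 1\<bar> \<le> k*M^2 + M^2" .
    then have "\<bar>z\<bar>*\<bar>k*M^2 - 1\<bar> \<le> \<bar>z\<bar>*(k*M^2 + M^2)" by (simp add: mult_left_mono)
    then show ?thesis unfolding abs_mult by (simp add: algebra_simps)
  qed
  have kM: "k*M \<le> k*M^2" using MM k1 by simp
  have pM: "p M > 0"
  proof -
    have "p M = M^3 - k*M + z*(k*M^2 - 1)" unfolding p_def by algebra
    moreover have "M^3 - k*M^2 - k*\<bar>z\<bar>*M^2 - \<bar>z\<bar>*M^2 = M^2" unfolding M_def by algebra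
    moreover have "M^2 > 0" using M1 by simp
    moreover have "-(z*(k*M^2 - 1)) \<le> k*\<bar>z\<bar>*M^2 + \<bar>z\<bar>*M^2" using bnd by (rule abs_le_D2)
    ultimately show ?thesis using kM by linarith
  qed
  have pmM: "p (-M) < 0"
  proof -
    have "p (-M) = -(M^3) + k*M + z*(k*M^2 - 1)" unfolding p_def by algebra
    moreover have "M^3 - k*M^2 - k*\<bar>z\<bar>*M^2 - \<bar>z\<bar>*M^2 = M^2" unfolding M_def by algebra
    moreover have "M^2 > 0" using M1 by simp
    moreover have "z*(k*M^2 - 1) \<le> k*\<bar>z\<bar>*M^2 + \<bar>z\<bar>*M^2" using bnd by (rule abs_le_D1)
    ultimately show ?thesis using kM by linarith
  qed
  obtain x1 where x1: "-M \<le> x1" "x1 \<le> -r" "p x1 = 0"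
    using IVT'[of p "-M" 0 "-r"] pmM pmr M1 cont by force
  obtain x2 where x2: "-r \<le> x2" "x2 \<le> r" "p x2 = 0"
    using IVT2'[of p r 0 "-r"] pr pmr r0 cont by force
  obtain x3 where x3: "r \<le> x3" "x3 \<le> M" "p x3 = 0"
    using IVT'[of p r 0 M] pr pM M1 cont by force
  have x1': "x1 < -r" using x1 pmr by (metis order_le_less less_irrefl)
  have x3': "x3 > r" using x3 pr by (metis order_le_less less_irrefl)
  have d: "x1 \<noteq> x2" "x1 \<noteq> x3" "x2 \<noteq> x3" using x1' x2 x3' by auto
  have r1: "x1^3 + (k*z)*x1^2 + (-k)*x1 + (-z) = 0" using x1 unfolding p_def by simp
  have r2': "x2^3 + (k*z)*x2^2 + (-k)*x2 + (-z) = 0" using x2 unfolding p_def by simp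
  have r3: "x3^3 + (k*z)*x3^2 + (-k)*x3 + (-z) = 0" using x3 unfolding p_def by simp
  note v = vieta3[OF d r1 r2' r3]
  show ?thesis using d v by (intro exI[of _ x1] exI[of _ x2] exI[of _ x3]) auto
qed


lemma NN_sym: "NN a b x y = NN a b y x" unfolding NN_def by algebra

lemma vert_from_r:
  assumes "L > 0" "L * NN a b xi xj = a^2*b^2*(xi-xj)^2" "L * NN a b xi xk = a^2*b^2*(xi-xk)^2"
  shows "(xi-xj)^2 * NN a b xi xk = (xi-xk)^2 * NN a b xi xj"
proof -
  have "L * ((xi-xj)^2 * NN a b xi xk) = L * ((xi-xk)^2 * NN a b xi xj)"
    using assms(2,3) by algebra
  then show ?thesis using assms(1) by simp
qed

lemma tri_from_roots:
  assumes ab: "a>0" "b>0" and k3: "k>3" and A: "4*k*a^2 = b^2*(k-1)*(k+3)"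
    and L0: "(k+1)^2*L0 = b^2*(k-1)*(k+3)"
    and d: "x1 \<noteq> x2" "x1 \<noteq> x3" "x2 \<noteq> x3"
    and s2: "x1*x2+x1*x3+x2*x3 = -k" and s1: "x1+x2+x3 = -k*(x1*x2*x3)"
  shows "three_periodic a b (par a b x1) (par a b x2) (par a b x3)"
    "L0*(a^2*(x1+x2)^2 + b^2*(1-x1*x2)^2) = a^2*b^2*(x1-x2)^2"
    "L0*(a^2*(x1+x3)^2 + b^2*(1-x1*x3)^2) = a^2*b^2*(x1-x3)^2"
    "L0*(a^2*(x2+x3)^2 + b^2*(1-x2*x3)^2) = a^2*b^2*(x2-x3)^2"
proof -
  show r12: "L0*(a^2*(x1+x2)^2 + b^2*(1-x1*x2)^2) = a^2*b^2*(x1-x2)^2"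
    by (rule sigma_conv[OF k3 A L0 s2 s1])
  have s2b: "x1*x3+x1*x2+x3*x2 = -k" using s2 by algebra
  have s1b: "x1+x3+x2 = -k*(x1*x3*x2)" using s1 by algebra
  show r13: "L0*(a^2*(x1+x3)^2 + b^2*(1-x1*x3)^2) = a^2*b^2*(x1-x3)^2"
    by (rule sigma_conv[OF k3 A L0 s2b s1b])
  have s2c: "x2*x3+x2*x1+x3*x1 = -k" using s2 by algebra
  have s1c: "x2+x3+x1 = -k*(x2*x3*x1)" using s1 by algebra
  show r23: "L0*(a^2*(x2+x3)^2 + b^2*(1-x2*x3)^2) = a^2*b^2*(x2-x3)^2"
    by (rule sigma_conv[OF k3 A L0 s2c s1c])
  have L0p: "L0 > 0"
  proof -
    have "b^2*(k-1)*(k+3) > 0" using k3 ab by simp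
    then have "(k+1)^2*L0 > 0" using L0 by simp
    then show ?thesis using k3 by (simp add: zero_less_mult_iff)
  qed
  have n12: "L0 * NN a b x1 x2 = a^2*b^2*(x1-x2)^2" using r12 unfolding NN_def .
  have n13: "L0 * NN a b x1 x3 = a^2*b^2*(x1-x3)^2" using r13 unfolding NN_def .
  have n23: "L0 * NN a b x2 x3 = a^2*b^2*(x2-x3)^2" using r23 unfolding NN_def .
  have n21: "L0 * NN a b x2 x1 = a^2*b^2*(x2-x1)^2" using n12 unfolding NN_sym[of a b x2 x1] by (simp add: power2_commute)
  have n31: "L0 * NN a b x3 x1 = a^2*b^2*(x3-x1)^2" using n13 unfolding NN_sym[of a b x3 x1] by (simp add: power2_commute)
  have n32: "L0 * NN a b x3 x2 = a^2*b^2*(x3-x2)^2" using n23 unfolding NN_sym[of a b x3 x2] by (simp add: power2_commute)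
  have v1: "(x1-x2)^2 * NN a b x1 x3 = (x1-x3)^2 * NN a b x1 x2" by (rule vert_from_r[OF L0p n12 n13])
  have v2: "(x2-x3)^2 * NN a b x2 x1 = (x2-x1)^2 * NN a b x2 x3" by (rule vert_from_r[OF L0p n23 n21])
  have v3: "(x3-x1)^2 * NN a b x3 x2 = (x3-x2)^2 * NN a b x3 x1" by (rule vert_from_r[OF L0p n31 n32])
  define P1 where "P1 = par a b x1"
  define P2 where "P2 = par a b x2"
  define P3 where "P3 = par a b x3"
  have e: "on_ellipse a b P1" "on_ellipse a b P2" "on_ellipse a b P3"
    unfolding P1_def P2_def P3_def using par_on[OF ab] by auto
  have nc1: "cross2 (P2-P1) (P3-P1) \<noteq> 0"
    unfolding P1_def P2_def P3_def cross_par using ab d pos1[of x1] pos1[of x2] pos1[of x3] by simp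
  have nc2: "cross2 (P3-P2) (P1-P2) \<noteq> 0" using nc1 cross_rot by metis
  have nc3: "cross2 (P1-P3) (P2-P3) \<noteq> 0" using nc2 cross_rot by metis
  have b1: "normal_bisects a b P1 P2 P3"
    using bis_iff[OF ab e(1) e(2) e(3) nc1] vert_x[OF ab d(1) d(2)] v1 unfolding P1_def P2_def P3_def by simp
  have b2: "normal_bisects a b P2 P3 P1"
    using bis_iff[OF ab e(2) e(3) e(1) nc2] vert_x[OF ab d(3) d(1)[symmetric]] v2 unfolding P1_def P2_def P3_def by simp
  have b3: "normal_bisects a b P3 P1 P2"
    using bis_iff[OF ab e(3) e(1) e(2) nc3] vert_x[OF ab d(2)[symmetric] d(3)[symmetric]] v3 unfolding P1_def P2_def P3_def by simp
  show "three_periodic a b (par a b x1) (par a b x2) (par a b x3)"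
    using e nc1 b1 b2 b3 unfolding three_periodic_def P1_def P2_def P3_def by simp
qed

lemma circ: "((1-z^2)/(1+z^2))^2 + (2*z/(1+z^2))^2 = (1::real)"
proof -
  have i: "inverse (1+z^2) * (1+z^2) = 1" by (rule inv1)
  show ?thesis unfolding divide_inverse using i by algebra
qed

lemma onell: "\<alpha> \<noteq> 0 \<Longrightarrow> \<beta> \<noteq> 0 \<Longrightarrow> p^2 + q^2 = 1 \<Longrightarrow> on_ellipse \<alpha> \<beta> (\<alpha>*p, \<beta>*q)"
  unfolding on_ellipse_def by (simp add: power_mult_distrib)

lemma circ_param:
  fixes p q :: real
  assumes e: "p^2 + q^2 = 1" and p1: "p \<noteq> -1"
  shows "\<exists>z. (1-z^2)/(1+z^2) = p \<and> 2*z/(1+z^2) = q"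
proof -
  have X1: "1 + p \<noteq> 0" using p1 by simp
  define z where "z = q / (1 + p)"
  have ix: "inverse (1+p) * (1+p) = 1" using X1 by simp
  have zz: "z = q * inverse (1+p)" unfolding z_def by (simp add: divide_inverse)
  have h1: "inverse (1 + z^2) = (1+p)/2"
  proof -
    have "(1 + z^2) * ((1+p)/2) = 1" unfolding zz using ix e by algebra
    then show ?thesis by (metis inverse_unique)
  qed
  have "(1-z^2)/(1+z^2) = p" unfolding divide_inverse h1 unfolding zz using ix e by algebra
  moreover have "2*z/(1+z^2) = q" unfolding divide_inverse h1 unfolding zz using ix e by algebra
  ultimately show ?thesis by blast
qed

lemma fwd_core:
  assumes ab: "a > 0" "b > 0" and k3: "k > 3" and A: "4*k*a^2 = b^2*(k-1)*(k+3)"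
    and L0: "(k+1)^2*L0 = b^2*(k-1)*(k+3)"
    and tp: "three_periodic a b P1 P2 P3"
    and nv: "P1 \<noteq> (-a,0)" "P2 \<noteq> (-a,0)" "P3 \<noteq> (-a,0)"
  shows "on_ellipse (a*(k-1)/(k+1)) (2*b/(k+1)) (tri_center h_X11 P1 P2 P3)"
    "on_ellipse (a*(k-1)*(k-3)/(k^2+6*k-3)) (2*b*(k-3)/(k^2+6*k-3)) (tri_center h_X55 P1 P2 P3)"
    "L0* sqd P1 P2 = a^2*b^2*(mu a b P1 P2)^2"
    "L0* sqd P2 P3 = a^2*b^2*(mu a b P2 P3)^2"
    "L0* sqd P1 P3 = a^2*b^2*(mu a b P1 P3)^2"
proof -
  obtain x1 x2 x3 where x: "P1 = par a b x1" "P2 = par a b x2" "P3 = par a b x3"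
    and d: "x1 \<noteq> x2" "x1 \<noteq> x3" "x2 \<noteq> x3"
    and r12: "L0*(a^2*(x1+x2)^2 + b^2*(1-x1*x2)^2) = a^2*b^2*(x1-x2)^2"
    and r13: "L0*(a^2*(x1+x3)^2 + b^2*(1-x1*x3)^2) = a^2*b^2*(x1-x3)^2"
    and r23: "L0*(a^2*(x2+x3)^2 + b^2*(1-x2*x3)^2) = a^2*b^2*(x2-x3)^2"
    and s2: "x1*x2+x1*x3+x2*x3 = -k" and s1: "x1+x2+x3 = -k*(x1*x2*x3)"
    using tp_core[OF ab k3 A L0 tp nv] by blast
  have L0p: "L0 > 0"
  proof -
    have "b^2*(k-1)*(k+3) > 0" using k3 ab by simp
    then have "(k+1)^2*L0 > 0" using L0 by simp
    then show ?thesis using k3 by (simp add: zero_less_mult_iff)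
  qed
  show "L0* sqd P1 P2 = a^2*b^2*(mu a b P1 P2)^2" unfolding x using pair_x[OF ab d(1)] r12 by simp
  show "L0* sqd P2 P3 = a^2*b^2*(mu a b P2 P3)^2" unfolding x using pair_x[OF ab d(3)] r23 by simp
  show "L0* sqd P1 P3 = a^2*b^2*(mu a b P1 P3)^2" unfolding x using pair_x[OF ab d(2)] r13 by simp
  define z where "z = x1*x2*x3"
  have z1: "1 + z^2 > 0" by (rule pos1)
  have k1: "k + 1 > 0" using k3 by simp
  have q: "k^2+6*k-3 > 0"
  proof -
    have "k^2+6*k-3 = (k-3)^2 + 12*(k-3) + 24" by algebra
    moreover have "(k-3)^2 \<ge> 0" by simp
    ultimately show ?thesis using k3 by (smt (verit))
  qed
  have "tri_center h_X11 P1 P2 P3 = (a*(-(k-1)*(1-z^2))/((1+z^2)*(k+1)), 2*b*(-2*z)/((1+z^2)*(k+1)))"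
    unfolding x z_def by (rule X11_formula[OF ab L0p k3 r12 r13 r23 d s2 s1])
  also have "... = ((a*(k-1)/(k+1)) * (-((1-z^2)/(1+z^2))), (2*b/(k+1)) * (-(2*z/(1+z^2))))"
    unfolding divide_inverse inverse_mult_distrib prod.inject by (intro conjI; algebra)
  finally have t11: "tri_center h_X11 P1 P2 P3 = ((a*(k-1)/(k+1)) * (-((1-z^2)/(1+z^2))), (2*b/(k+1)) * (-(2*z/(1+z^2))))" .
  show "on_ellipse (a*(k-1)/(k+1)) (2*b/(k+1)) (tri_center h_X11 P1 P2 P3)"
    unfolding t11 by (rule onell) (use ab k3 circ[of z] in simp_all)
  have "tri_center h_X55 P1 P2 P3 = (a*(-(k-1)*(k-3)*(1-z^2))/((1+z^2)*(k^2+6*k-3)), 2*b*(2*(k-3)*z)/((1+z^2)*(k^2+6*k-3)))"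
    unfolding x z_def by (rule X55_formula[OF ab L0p k3 r12 r13 r23 d s2 s1])
  also have "... = ((a*(k-1)*(k-3)/(k^2+6*k-3)) * (-((1-z^2)/(1+z^2))), (2*b*(k-3)/(k^2+6*k-3)) * (2*z/(1+z^2)))"
    unfolding divide_inverse inverse_mult_distrib prod.inject by (intro conjI; algebra)
  finally have t55: "tri_center h_X55 P1 P2 P3 = ((a*(k-1)*(k-3)/(k^2+6*k-3)) * (-((1-z^2)/(1+z^2))), (2*b*(k-3)/(k^2+6*k-3)) * (2*z/(1+z^2)))" .
  show "on_ellipse (a*(k-1)*(k-3)/(k^2+6*k-3)) (2*b*(k-3)/(k^2+6*k-3)) (tri_center h_X55 P1 P2 P3)"
    unfolding t55 by (rule onell) (use ab k3 q circ[of z] in simp_all)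
qed


lemma sqd_sym: "sqd P Q = sqd Q P" unfolding sqd_def by (simp add: power2_commute)
lemma mu_sym: "mu a b P Q = mu a b Q P" unfolding mu_def by (simp add: mult.commute)

lemma refl_eq_ma: "refl P = (-a, 0) \<longleftrightarrow> P = (a, 0)"
  unfolding refl_def by (cases P) auto

lemma fwd_all:
  assumes ab: "a > 0" "b > 0" and k3: "k > 3" and A: "4*k*a^2 = b^2*(k-1)*(k+3)"
    and L0: "(k+1)^2*L0 = b^2*(k-1)*(k+3)"
    and tp: "three_periodic a b P1 P2 P3"
  shows "on_ellipse (a*(k-1)/(k+1)) (2*b/(k+1)) (tri_center h_X11 P1 P2 P3)"
    "on_ellipse (a*(k-1)*(k-3)/(k^2+6*k-3)) (2*b*(k-3)/(k^2+6*k-3)) (tri_center h_X55 P1 P2 P3)"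
    "L0 * sqd P1 P2 = a^2*b^2*(mu a b P1 P2)^2"
    "L0 * sqd P2 P3 = a^2*b^2*(mu a b P2 P3)^2"
    "L0 * sqd P1 P3 = a^2*b^2*(mu a b P1 P3)^2"
proof -
  have "(on_ellipse (a*(k-1)/(k+1)) (2*b/(k+1)) (tri_center h_X11 P1 P2 P3)
    \<and> on_ellipse (a*(k-1)*(k-3)/(k^2+6*k-3)) (2*b*(k-3)/(k^2+6*k-3)) (tri_center h_X55 P1 P2 P3))
    \<and> L0 * sqd P1 P2 = a^2*b^2*(mu a b P1 P2)^2
    \<and> L0 * sqd P2 P3 = a^2*b^2*(mu a b P2 P3)^2
    \<and> L0 * sqd P1 P3 = a^2*b^2*(mu a b P1 P3)^2"
  proof (cases "P1 \<noteq> (-a,0) \<and> P2 \<noteq> (-a,0) \<and> P3 \<noteq> (-a,0)")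
    case True
    then show ?thesis using fwd_core[OF ab k3 A L0 tp] by blast
  next
    case False
    have np: "P1 \<noteq> (a,0) \<and> P2 \<noteq> (a,0) \<and> P3 \<noteq> (a,0)" using no_pm[OF ab tp] False by blast
    have tp': "three_periodic a b (refl P1) (refl P2) (refl P3)" using tp refl_tp by simp
    have nv': "refl P1 \<noteq> (-a,0)" "refl P2 \<noteq> (-a,0)" "refl P3 \<noteq> (-a,0)" using np refl_eq_ma by auto
    note f = fwd_core[OF ab k3 A L0 tp' nv']
    show ?thesis using f unfolding refl_tc refl_on refl_sqd refl_mu by blast
  qed
  then show "on_ellipse (a*(k-1)/(k+1)) (2*b/(k+1)) (tri_center h_X11 P1 P2 P3)"
    "on_ellipse (a*(k-1)*(k-3)/(k^2+6*k-3)) (2*b*(k-3)/(k^2+6*k-3)) (tri_center h_X55 P1 P2 P3)"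
    "L0 * sqd P1 P2 = a^2*b^2*(mu a b P1 P2)^2"
    "L0 * sqd P2 P3 = a^2*b^2*(mu a b P2 P3)^2"
    "L0 * sqd P1 P3 = a^2*b^2*(mu a b P1 P3)^2" by blast+
qed

lemma surj_core:
  assumes ab: "a > 0" "b > 0" and k3: "k > 3" and A: "4*k*a^2 = b^2*(k-1)*(k+3)"
    and L0: "(k+1)^2*L0 = b^2*(k-1)*(k+3)"
  shows "\<exists>P1 P2 P3. three_periodic a b P1 P2 P3 \<and>
      tri_center h_X11 P1 P2 P3 = ((a*(k-1)/(k+1)) * (-((1-z^2)/(1+z^2))), (2*b/(k+1)) * (-(2*z/(1+z^2))))
    \<and> tri_center h_X55 P1 P2 P3 = ((a*(k-1)*(k-3)/(k^2+6*k-3)) * (-((1-z^2)/(1+z^2))), (2*b*(k-3)/(k^2+6*k-3)) * (2*z/(1+z^2)))"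
proof -
  obtain x1 x2 x3 where d: "x1 \<noteq> x2" "x1 \<noteq> x3" "x2 \<noteq> x3" and s2: "x1*x2+x1*x3+x2*x3 = -k"
    and s1: "x1+x2+x3 = -k*(x1*x2*x3)" and sz: "x1*x2*x3 = z"
    using cubic_roots[of k z] k3 by auto
  note t = tri_from_roots[OF ab k3 A L0 d s2 s1]
  have L0p: "L0 > 0"
  proof -
    have "b^2*(k-1)*(k+3) > 0" using k3 ab by simp
    then have "(k+1)^2*L0 > 0" using L0 by simp
    then show ?thesis using k3 by (simp add: zero_less_mult_iff)
  qed
  have "tri_center h_X11 (par a b x1) (par a b x2) (par a b x3) = (a*(-(k-1)*(1-z^2))/((1+z^2)*(k+1)), 2*b*(-2*z)/((1+z^2)*(k+1)))"
    unfolding sz[symmetric] by (rule X11_formula[OF ab L0p k3 t(2) t(3) t(4) d s2 s1])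
  also have "... = ((a*(k-1)/(k+1)) * (-((1-z^2)/(1+z^2))), (2*b/(k+1)) * (-(2*z/(1+z^2))))"
    unfolding divide_inverse inverse_mult_distrib prod.inject by (intro conjI; algebra)
  finally have t11: "tri_center h_X11 (par a b x1) (par a b x2) (par a b x3) = ((a*(k-1)/(k+1)) * (-((1-z^2)/(1+z^2))), (2*b/(k+1)) * (-(2*z/(1+z^2))))" .
  have "tri_center h_X55 (par a b x1) (par a b x2) (par a b x3) = (a*(-(k-1)*(k-3)*(1-z^2))/((1+z^2)*(k^2+6*k-3)), 2*b*(2*(k-3)*z)/((1+z^2)*(k^2+6*k-3)))"
    unfolding sz[symmetric] by (rule X55_formula[OF ab L0p k3 t(2) t(3) t(4) d s2 s1])
  also have "... = ((a*(k-1)*(k-3)/(k^2+6*k-3)) * (-((1-z^2)/(1+z^2))), (2*b*(k-3)/(k^2+6*k-3)) * (2*z/(1+z^2)))"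
    unfolding divide_inverse inverse_mult_distrib prod.inject by (intro conjI; algebra)
  finally have t55: "tri_center h_X55 (par a b x1) (par a b x2) (par a b x3) = ((a*(k-1)*(k-3)/(k^2+6*k-3)) * (-((1-z^2)/(1+z^2))), (2*b*(k-3)/(k^2+6*k-3)) * (2*z/(1+z^2)))" .
  show ?thesis using t(1) t11 t55 by blast
qed

lemma surj_ell:
  fixes \<alpha> \<beta> :: real and F :: "real \<Rightarrow> real \<times> real" and sg :: real
  assumes al: "\<alpha> \<noteq> 0" "\<beta> \<noteq> 0" and sg: "sg = 1 \<or> sg = -1"
    and F: "\<And>z. F z \<in> S" "\<And>z. F z = (\<alpha> * (-((1-z^2)/(1+z^2))), \<beta> * (sg*(2*z/(1+z^2))))"
    and Sr: "\<And>X. X \<in> S \<Longrightarrow> refl X \<in> S"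
    and X: "on_ellipse \<alpha> \<beta> X"
  shows "X \<in> S"
proof (cases "X = (\<alpha>, 0)")
  case True
  have "F 0 = (-\<alpha>, 0)" using F(2)[of 0] by simp
  then have "refl (F 0) = X" unfolding True refl_def by simp
  then show ?thesis using Sr[OF F(1)[of 0]] by simp
next
  case False
  obtain u v where X': "X = (u,v)" by fastforce
  define p where "p = -u/\<alpha>"
  define q where "q = sg * v / \<beta>"
  have ss: "sg^2 = 1" using sg by auto
  have e: "p^2 + q^2 = 1" using X unfolding X' on_ellipse_def p_def q_def
    by (simp add: power_divide power_mult_distrib ss)
  have p1: "p \<noteq> -1"
  proof
    assume "p = -1"
    then have u: "u = \<alpha>" unfolding p_def using al by (simp add: field_simps)
    then have "q^2 = 0" using e \<open>p = -1\<close> by simp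
    then have "v = 0" unfolding q_def using al sg by auto
    then show False using False u X' by simp
  qed
  obtain z where z: "(1-z^2)/(1+z^2) = p" "2*z/(1+z^2) = q" using circ_param[OF e p1] by blast
  have "F z = X" unfolding F(2) z X' p_def q_def using al sg by auto
  then show ?thesis using F(1)[of z] by simp
qed


lemma locus_refl: "X \<in> locus h a b \<Longrightarrow> refl X \<in> locus h a b"
proof -
  assume "X \<in> locus h a b"
  then obtain P1 P2 P3 where X: "X = tri_center h P1 P2 P3" and tp: "three_periodic a b P1 P2 P3"
    unfolding locus_def by blast
  have "refl X = tri_center h (refl P1) (refl P2) (refl P3)" unfolding X refl_tc ..
  moreover have "three_periodic a b (refl P1) (refl P2) (refl P3)" using tp refl_tp by simp
  ultimately show "refl X \<in> locus h a b" unfolding locus_def by blast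
qed

lemma div_aux: fixes x y r q :: real assumes "r \<noteq> 0" "q \<noteq> 0" shows "(x*r/q)/(y*r/q) = x/y"
  using assms by (cases "y = 0") (auto simp: divide_simps)

lemma div_aux2: fixes x y q :: real assumes "q \<noteq> 0" shows "(x/q)/(y/q) = x/y"
  using assms by (cases "y = 0") (auto simp: divide_simps)

theorem theorem1:
  fixes a b :: real
  assumes "a > b" and "b > 0"
  defines "c \<equiv> sqrt (a^2 - b^2)"
      and "\<delta> \<equiv> sqrt (a^4 - a^2 * b^2 + b^4)"
  defines "ac \<equiv> a * (\<delta> - b^2) / c^2"
      and "bc \<equiv> b * (a^2 - \<delta>) / c^2"
      and "a55 \<equiv> a * (\<delta> - b^2) / (a^2 + b^2)"
      and "b55 \<equiv> b * (a^2 - \<delta>) / (a^2 + b^2)"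
  shows "locus h_X11 a b = {X. on_ellipse ac bc X}
       \<and> (\<forall>P1 P2 P3. three_periodic a b P1 P2 P3 \<longrightarrow>
             line_tangent_ellipse ac bc P1 P2 \<and> line_tangent_ellipse ac bc P2 P3
             \<and> line_tangent_ellipse ac bc P3 P1)
       \<and> locus h_X55 a b = {X. on_ellipse a55 b55 X}
       \<and> a55 / b55 = ac / bc"
proof -
  have ab: "a > 0" "b > 0" using assms(1,2) by simp_all
  define k where "k = (2*a^2 - b^2 + 2*\<delta>)/b^2"
  have dd: "\<delta> = sqrt(a^4 - a^2*b^2 + b^4)" unfolding \<delta>_def ..
  note kf = kfacts[OF assms(1,2) dd k_def]
  have k3: "k > 3" by (rule kf(1))
  have k0: "k > 0" "k \<noteq> 0" "k + 1 \<noteq> 0" "k + 1 > 0" using k3 by simp_all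
  have A: "4*k*a^2 = b^2*(k-1)*(k+3)" using kf(2) k0 by (simp add: field_simps)
  have dk: "4*k*\<delta> = b^2*(k^2+3)" using kf(3) k0 by (simp add: field_simps)
  define L0 where "L0 = b^2*(k-1)*(k+3)/(k+1)^2"
  have L0e: "(k+1)^2*L0 = b^2*(k-1)*(k+3)" using k0 unfolding L0_def by simp
  have ab2: "a^2 - b^2 > 0" using assms(1,2) by (simp add: power_strict_mono)
  have c2: "c^2 = a^2 - b^2" unfolding c_def using ab2 by simp
  have c2k: "4*k*c^2 = b^2*(k-3)*(k+1)" unfolding c2 using A by algebra
  have c2ne: "c^2 \<noteq> 0" using ab2 c2 by simp
  have q: "k^2+6*k-3 > 0"
  proof -
    have "k^2+6*k-3 = (k-3)^2 + 12*(k-3) + 24" by algebra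
    moreover have "(k-3)^2 \<ge> 0" by simp
    ultimately show ?thesis using k3 by (smt (verit))
  qed
  have apb: "a^2 + b^2 \<noteq> 0" using ab by simp
  have apbk: "4*k*(a^2+b^2) = b^2*(k^2+6*k-3)" using A by algebra
  have ace: "ac = a*(k-1)/(k+1)"
  proof -
    have "4*k*((\<delta> - b^2)*(k+1) - (k-1)*c^2) = 0" using dk c2k by algebra
    then have "(\<delta> - b^2)*(k+1) = (k-1)*c^2" using k0 by simp
    then show ?thesis unfolding ac_def by (rule ratio_aux) (use c2ne k0 in simp_all)
  qed
  have bce: "bc = 2*b/(k+1)"
  proof -
    have "4*k*((a^2 - \<delta>)*(k+1) - 2*c^2) = 0" using dk c2k A by algebra
    then have "(a^2 - \<delta>)*(k+1) = 2*c^2" using k0 by simp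
    then have "bc = b*2/(k+1)" unfolding bc_def by (rule ratio_aux) (use c2ne k0 in simp_all)
    then show ?thesis by simp
  qed
  have a55e: "a55 = a*(k-1)*(k-3)/(k^2+6*k-3)"
  proof -
    have "4*k*((\<delta> - b^2)*(k^2+6*k-3) - ((k-1)*(k-3))*(a^2+b^2)) = 0" using dk apbk by algebra
    then have "(\<delta> - b^2)*(k^2+6*k-3) = ((k-1)*(k-3))*(a^2+b^2)" using k0 by simp
    then have "a55 = a*((k-1)*(k-3))/(k^2+6*k-3)" unfolding a55_def by (rule ratio_aux) (use apb q in simp_all)
    then show ?thesis by (simp add: mult.assoc)
  qed
  have b55e: "b55 = 2*b*(k-3)/(k^2+6*k-3)"
  proof -
    have "4*k*((a^2 - \<delta>)*(k^2+6*k-3) - (2*(k-3))*(a^2+b^2)) = 0" using dk apbk A by algebra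
    then have "(a^2 - \<delta>)*(k^2+6*k-3) = (2*(k-3))*(a^2+b^2)" using k0 by simp
    then have "b55 = b*(2*(k-3))/(k^2+6*k-3)" unfolding b55_def by (rule ratio_aux) (use apb q in simp_all)
    then show ?thesis by (simp add: mult.assoc mult.left_commute)
  qed
  have acne: "ac \<noteq> 0" unfolding ace using ab k3 by simp
  have bcne: "bc \<noteq> 0" unfolding bce using ab k3 by simp
  have k1sq: "(k+1)^2 \<noteq> 0" using k0 by simp
  have acsq: "ac^2 = a^2 - L0"
  proof -
    have "ac^2 = (a^2*(k-1)^2)/(k+1)^2" unfolding ace by (simp add: power_divide power_mult_distrib)
    also have "a^2*(k-1)^2 = a^2*(k+1)^2 - b^2*(k-1)*(k+3)" using A by algebra
    also have "(a^2*(k+1)^2 - b^2*(k-1)*(k+3))/(k+1)^2 = a^2 - L0"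
      unfolding L0_def using k1sq by (simp add: diff_divide_distrib)
    finally show ?thesis .
  qed
  have bcsq: "bc^2 = b^2 - L0"
  proof -
    have "bc^2 = (4*b^2)/(k+1)^2" unfolding bce by (simp add: power_divide power_mult_distrib)
    also have "4*b^2 = b^2*(k+1)^2 - b^2*(k-1)*(k+3)" by algebra
    also have "(b^2*(k+1)^2 - b^2*(k-1)*(k+3))/(k+1)^2 = b^2 - L0"
      unfolding L0_def using k1sq by (simp add: diff_divide_distrib)
    finally show ?thesis .
  qed
  note fa = fwd_all[OF ab k3 A L0e]
  note sc = surj_core[OF ab k3 A L0e]
  have C1: "locus h_X11 a b = {X. on_ellipse ac bc X}"
  proof (rule set_eqI, rule iffI)
    fix X assume "X \<in> locus h_X11 a b"
    then obtain P1 P2 P3 where X: "X = tri_center h_X11 P1 P2 P3" and tp: "three_periodic a b P1 P2 P3"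
      unfolding locus_def by blast
    show "X \<in> {X. on_ellipse ac bc X}" using fa(1)[OF tp] unfolding X ace bce by simp
  next
    fix X assume X: "X \<in> {X. on_ellipse ac bc X}"
    define F where "F = (\<lambda>z::real. (ac * (-((1-z^2)/(1+z^2))), bc * ((-1)*(2*z/(1+z^2)))))"
    show "X \<in> locus h_X11 a b"
    proof (rule surj_ell[of ac bc "-1" F])
      show "ac \<noteq> 0" "bc \<noteq> 0" by (fact acne, fact bcne)
      show "(-1::real) = 1 \<or> (-1::real) = -1" by simp
      fix z :: real
      show "F z \<in> locus h_X11 a b"
      proof -
        obtain P1 P2 P3 where tp: "three_periodic a b P1 P2 P3" and
          t: "tri_center h_X11 P1 P2 P3 = ((a*(k-1)/(k+1)) * (-((1-z^2)/(1+z^2))), (2*b/(k+1)) * (-(2*z/(1+z^2))))"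
          using sc[of z] by blast
        have "F z = tri_center h_X11 P1 P2 P3" unfolding t F_def ace bce by simp
        then show ?thesis unfolding locus_def using tp by blast
      qed
      show "F z = (ac * (-((1-z^2)/(1+z^2))), bc * ((-1)*(2*z/(1+z^2))))" unfolding F_def ..
    next
      fix Y assume "Y \<in> locus h_X11 a b" then show "refl Y \<in> locus h_X11 a b" by (rule locus_refl)
    next
      show "on_ellipse ac bc X" using X by simp
    qed
  qed
  have C3: "locus h_X55 a b = {X. on_ellipse a55 b55 X}"
  proof (rule set_eqI, rule iffI)
    fix X assume "X \<in> locus h_X55 a b"
    then obtain P1 P2 P3 where X: "X = tri_center h_X55 P1 P2 P3" and tp: "three_periodic a b P1 P2 P3"
      unfolding locus_def by blast
    show "X \<in> {X. on_ellipse a55 b55 X}" using fa(2)[OF tp] unfolding X a55e b55e by simp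
  next
    fix X assume X: "X \<in> {X. on_ellipse a55 b55 X}"
    define F where "F = (\<lambda>z::real. (a55 * (-((1-z^2)/(1+z^2))), b55 * (1*(2*z/(1+z^2)))))"
    have a55ne: "a55 \<noteq> 0" unfolding a55e using ab k3 q by simp
    have b55ne: "b55 \<noteq> 0" unfolding b55e using ab k3 q by simp
    show "X \<in> locus h_X55 a b"
    proof (rule surj_ell[of a55 b55 1 F])
      show "a55 \<noteq> 0" "b55 \<noteq> 0" by (fact a55ne, fact b55ne)
      show "(1::real) = 1 \<or> (1::real) = -1" by simp
      fix z :: real
      show "F z \<in> locus h_X55 a b"
      proof -
        obtain P1 P2 P3 where tp: "three_periodic a b P1 P2 P3" and
          t: "tri_center h_X55 P1 P2 P3 = ((a*(k-1)*(k-3)/(k^2+6*k-3)) * (-((1-z^2)/(1+z^2))), (2*b*(k-3)/(k^2+6*k-3)) * (2*z/(1+z^2)))"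
          using sc[of z] by blast
        have "F z = tri_center h_X55 P1 P2 P3" unfolding t F_def a55e b55e by simp
        then show ?thesis unfolding locus_def using tp by blast
      qed
      show "F z = (a55 * (-((1-z^2)/(1+z^2))), b55 * (1*(2*z/(1+z^2))))" unfolding F_def ..
    next
      fix Y assume "Y \<in> locus h_X55 a b" then show "refl Y \<in> locus h_X55 a b" by (rule locus_refl)
    next
      show "on_ellipse a55 b55 X" using X by simp
    qed
  qed
  have C2: "\<forall>P1 P2 P3. three_periodic a b P1 P2 P3 \<longrightarrow>
             line_tangent_ellipse ac bc P1 P2 \<and> line_tangent_ellipse ac bc P2 P3
             \<and> line_tangent_ellipse ac bc P3 P1"
  proof (intro allI impI)
    fix P1 P2 P3 assume tp: "three_periodic a b P1 P2 P3"
    have e: "on_ellipse a b P1" "on_ellipse a b P2" "on_ellipse a b P3"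
      using tp unfolding three_periodic_def by auto
    have d: "P1 \<noteq> P2" "P1 \<noteq> P3" "P2 \<noteq> P3" using tp_distinct[OF tp] by auto
    have r31: "L0 * sqd P3 P1 = a^2*b^2*(mu a b P3 P1)^2" using fa(5)[OF tp] sqd_sym mu_sym by metis
    show "line_tangent_ellipse ac bc P1 P2 \<and> line_tangent_ellipse ac bc P2 P3 \<and> line_tangent_ellipse ac bc P3 P1"
      using tangent[OF ab acne bcne acsq bcsq e(1) e(2) d(1) fa(3)[OF tp]]
        tangent[OF ab acne bcne acsq bcsq e(2) e(3) d(3) fa(4)[OF tp]]
        tangent[OF ab acne bcne acsq bcsq e(3) e(1) d(2)[symmetric] r31] by blast
  qed
  have C4: "a55 / b55 = ac / bc"
  proof -
    have "a55 / b55 = (a*(k-1))/(2*b)" unfolding a55e b55e by (rule div_aux) (use k3 q in simp_all)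
    also have "... = ac / bc" unfolding ace bce by (rule div_aux2[symmetric]) (use k0 in simp)
    finally show ?thesis .
  qed
  show ?thesis using C1 C2 C3 C4 by blast
qed


end
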